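(* Let $N=n$ be prime, $f=x_1^N+\dots+x_N^N$, $S\subseteq S_N$, $G=S\ltimes\mathrm{SL}_f$. Let $\sigma=\prod_{a=1}^p\sigma_a\in S$ be a disjoint cycle decomposition (length-1 cycles included) with supports $I_a$, let $\widetilde x_{a}=\sum_{k\in I_a}x_k$, and let $X=\prod_{a=1}^p\lfloor\widetilde x_{a}^{r_a}\rfloor\xi_{\sigma_a}\in\mathcal A'_{f,\sigma}$ with $0\le r_a\le N-2$. For each $a$ let $k_a\in\{1,\dots,N-1\}$ be the unique integer with $r_a+1\equiv k_a|\sigma_a|\pmod N$. If $X$ is nonzero in $\mathcal A_{f,G}$, i.e. $X$ is invariant under $Z_G(\sigma)$, then $k_a=k_b$ for all $1\le a,b\le p$.
   Context: $\zeta=\exp(2\pi\sqrt{-1}/N)$; $t_k$ multiplies $x_k$ by $\zeta$; $G_f^d=\langle t_1,\dots,t_N\rangle$, $\mathrm{SL}_f=\{g\in G_f^d:\det g=1\}$; $S_N$ permutes coordinates. For $u\in S_N\ltimes G_f^d$: $\mathrm{Fix}(u)$ is the eigenvalue-1 subspace, $M_u$ the sum of the other eigenspaces, $\mathcal A'_{f,u}=\mathrm{Jac}(f|_{\mathrm{Fix}(u)})\,\xi_u$ with formal generator $\xi_u$; for a permutation $\sigma=\prod_a\sigma_a$ one writes $\xi_\sigma=\prod_a\xi_{\sigma_a}$ and $\lfloor\prod_a\widetilde x_a^{r_a}\rfloor\xi_\sigma=\prod_a\lfloor\widetilde x_a^{r_a}\rfloor\xi_{\sigma_a}$. For $v\in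 Z_G(u)$, $v^*(\lfloor\phi(\mathbf x)\rfloor\xi_u)=\det(v|_{M_u})^{-1}\lfloor\phi(v\cdot\mathbf x)\rfloor\xi_u$. The phase space is $\mathcal A_{f,G}=\bigoplus_{u\in\mathcal C^G}(\mathcal A'_{f,u})^{Z_G(u)}$, $\mathcal C^G$ a set of conjugacy class representatives. *)

theory Defs
  imports Complex_Main "Jordan_Normal_Form.Determinant" "HOL-Combinatorics.Permutations"
begin

text \<open>Coordinates are indexed by 0..N-1; vectors are complex vectors of dimension N,
  group elements are N x N complex matrices acting on column vectors.\<close>

definition zeta :: "nat \<Rightarrow> complex" where
  "zeta N = cis (2 * pi / real N)"

definition perm_mat :: "nat \<Rightarrow> (nat \<Rightarrow> nat) \<Rightarrow> complex mat" where
  "perm_mat N \<tau> = mat N N (\<lambda>(i,j). if i = \<tau> j then 1 else 0)"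

text \<open>Diagonal element t_1^(a 0) ... t_N^(a (N-1)) of G_f^d.\<close>
definition diag_el :: "nat \<Rightarrow> (nat \<Rightarrow> nat) \<Rightarrow> complex mat" where
  "diag_el N a = mat N N (\<lambda>(i,j). if i = j then zeta N ^ a i else 0)"

definition Gd :: "nat \<Rightarrow> complex mat set" where
  "Gd N = {diag_el N a | a. True}"

definition SLf :: "nat \<Rightarrow> complex mat set" where
  "SLf N = {g \<in> Gd N. det g = 1}"

definition Ggrp :: "nat \<Rightarrow> (nat \<Rightarrow> nat) set \<Rightarrow> complex mat set" where
  "Ggrp N S = {perm_mat N \<tau> * g | \<tau> g. \<tau> \<in> S \<and> g \<in> SLf N}"

definition centralizer :: "complex mat set \<Rightarrow> complex mat \<Rightarrow> complex mat set" where
  "centralizer G u = {v \<in> G. v * u = u * v}"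

definition Fix :: "nat \<Rightarrow> complex mat \<Rightarrow> complex vec set" where
  "Fix N u = {x \<in> carrier_vec N. u *\<^sub>v x = x}"

definition vsum :: "nat \<Rightarrow> complex vec list \<Rightarrow> complex vec" where
  "vsum N ys = foldr (+) ys (0\<^sub>v N)"

definition lincomb :: "nat \<Rightarrow> (nat \<Rightarrow> complex) \<Rightarrow> complex vec list \<Rightarrow> complex vec" where
  "lincomb N c bs = vsum N (map (\<lambda>i. c i \<cdot>\<^sub>v bs ! i) [0..<length bs])"

definition Mspace :: "nat \<Rightarrow> complex mat \<Rightarrow> complex vec set" where
  "Mspace N u = {vsum N ys | ys. \<forall>y \<in> set ys. y \<in> carrier_vec N \<and>
       (\<exists>c. c \<noteq> 1 \<and> u *\<^sub>v y = c \<cdot>\<^sub>v y)}"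

text \<open>Determinant of the restriction of v to a v-invariant subspace W,
  computed in some basis bs of W (independent of the choice).\<close>
definition is_basis :: "nat \<Rightarrow> complex vec list \<Rightarrow> complex vec set \<Rightarrow> bool" where
  "is_basis N bs W \<longleftrightarrow> set bs \<subseteq> carrier_vec N \<and>
     (\<forall>c. lincomb N c bs = 0\<^sub>v N \<longrightarrow> (\<forall>i < length bs. c i = 0)) \<and>
     W = {lincomb N c bs | c. True}"

definition det_restr :: "nat \<Rightarrow> complex mat \<Rightarrow> complex vec set \<Rightarrow> complex" where
  "det_restr N v W = (SOME d. \<exists>bs A. is_basis N bs W \<and>
      A \<in> carrier_mat (length bs) (length bs) \<and>
      (\<forall>j < length bs. v *\<^sub>v (bs ! j) = lincomb N (\<lambda>i. A $$ (i, j)) bs) \<and>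
      d = det A)"

inductive_set polyfun :: "nat \<Rightarrow> (complex vec \<Rightarrow> complex) set" for N where
  const: "(\<lambda>x. c) \<in> polyfun N"
| coord: "i < N \<Longrightarrow> (\<lambda>x. x $ i) \<in> polyfun N"
| add: "p \<in> polyfun N \<Longrightarrow> q \<in> polyfun N \<Longrightarrow> (\<lambda>x. p x + q x) \<in> polyfun N"
| mult: "p \<in> polyfun N \<Longrightarrow> q \<in> polyfun N \<Longrightarrow> (\<lambda>x. p x * q x) \<in> polyfun N"

definition fermat :: "nat \<Rightarrow> complex vec \<Rightarrow> complex" where
  "fermat N x = (\<Sum>i<N. (x $ i) ^ N)"

definition dir_deriv :: "nat \<Rightarrow> (complex vec \<Rightarrow> complex) \<Rightarrow> complex vec \<Rightarrow> complex vec \<Rightarrow> complex" where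
  "dir_deriv N F w x = (THE D. ((\<lambda>t. F (x + t \<cdot>\<^sub>v w)) has_field_derivative D) (at 0))"

text \<open>Equality of classes in Jac(F|_V): the difference, as a polynomial function on the
  linear subspace V, lies in the ideal generated by the partial derivatives of F|_V
  (i.e. by the directional derivatives of F along vectors of V, restricted to V).\<close>
definition jac_eq :: "nat \<Rightarrow> (complex vec \<Rightarrow> complex) \<Rightarrow> complex vec set
     \<Rightarrow> (complex vec \<Rightarrow> complex) \<Rightarrow> (complex vec \<Rightarrow> complex) \<Rightarrow> bool" where
  "jac_eq N F V \<phi> \<psi> \<longleftrightarrow> (\<exists>ws hs. length ws = length hs \<and> set ws \<subseteq> V \<and> set hs \<subseteq> polyfun N \<and>
      (\<forall>x \<in> V. \<phi> x - \<psi> x = (\<Sum>i<length ws. (hs ! i) x * dir_deriv N F (ws ! i) x)))"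

definition cycle_supports :: "nat \<Rightarrow> (nat \<Rightarrow> nat) \<Rightarrow> nat set set" where
  "cycle_supports N \<sigma> = {{(\<sigma> ^^ k) i | k. True} | i. i < N}"

end

theory Submission
  imports Defs "HOL-Computational_Algebra.Polynomial" "HOL-Library.FuncSet" "HOL-Computational_Algebra.Primes"
begin

lemma cis_pow_eq_1:
  assumes n: "n > 0"
  shows "cis (2 * pi / real n) ^ a = 1 \<longleftrightarrow> n dvd a"
proof
  assume h: "cis (2 * pi / real n) ^ a = 1"
  hence "cis (real a * (2 * pi / real n)) = 1" by (simp add: DeMoivre)
  hence "cos (real a * (2 * pi / real n)) = 1" by (simp add: complex_eq_iff)
  then obtain m :: int where m: "real a * (2 * pi / real n) = real_of_int m * 2 * pi"
    by (auto simp: cos_one_2pi_int)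
  hence "real a = real_of_int m * real n" using n by (simp add: field_simps)
  hence "int a = m * int n" by (metis of_int_eq_iff of_int_mult of_int_of_nat_eq)
  thus "n dvd a" by (metis dvd_triv_right int_dvd_int_iff)
next
  assume "n dvd a"
  then obtain k where "a = n * k" by auto
  hence "cis (2 * pi / real n) ^ a = (cis (2 * pi / real n) ^ n) ^ k" by (simp add: power_mult)
  also have "cis (2 * pi / real n) ^ n = 1" using n by (simp add: DeMoivre)
  finally show "cis (2 * pi / real n) ^ a = 1" by simp
qed

lemma zeta_pow_eq:
  assumes n: "n > 0" and h: "zeta n ^ e = zeta n ^ f"
  shows "int e mod int n = int f mod int n"
proof -
  have nz: "zeta n \<noteq> 0" by (simp add: zeta_def)
  { fix e f :: nat assume ef: "e \<le> f" "zeta n ^ e = zeta n ^ f"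
    have "zeta n ^ f = zeta n ^ e * zeta n ^ (f - e)" using ef(1) by (metis le_add_diff_inverse power_add)
    hence "zeta n ^ (f - e) = 1" using ef nz by simp
    hence "n dvd (f - e)" using cis_pow_eq_1[OF n] unfolding zeta_def by simp
    hence "int e mod int n = int f mod int n" using ef
      by (metis of_nat_diff int_dvd_int_iff mod_eq_dvd_iff) }
  thus ?thesis using h by (cases "e \<le> f") (metis, metis nat_le_linear)
qed

lemma roots_sum_pow:
  assumes n: "n > 0" and e: "\<not> n dvd e"
  shows "(\<Sum>z\<in>{z::complex. z ^ n = 1}. z ^ e) = 0"
proof -
  define q where "q = cis (2 * pi / real n) ^ e"
  have "(\<Sum>z\<in>{z::complex. z ^ n = 1}. z ^ e) = (\<Sum>k<n. cis (2 * pi * real k / real n) ^ e)"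
    using n by (intro sum.reindex_bij_betw [symmetric] bij_betw_roots_unity) auto
  also have "\<dots> = (\<Sum>k<n. q ^ k)"
  proof (intro sum.cong refl)
    fix k
    have "cis (2 * pi * real k / real n) = cis (2 * pi / real n) ^ k" by (simp add: DeMoivre mult_ac)
    thus "cis (2 * pi * real k / real n) ^ e = q ^ k" by (simp add: q_def power_mult[symmetric] mult.commute)
  qed
  also have "q \<noteq> 1" using cis_pow_eq_1[OF n] e unfolding q_def by simp
  hence "(\<Sum>k<n. q ^ k) = (q ^ n - 1) / (q - 1)" by (rule geometric_sum)
  also have "q ^ n = (cis (2 * pi / real n) ^ n) ^ e" by (simp add: q_def power_mult[symmetric] mult.commute)
  also have "cis (2 * pi / real n) ^ n = 1" using cis_pow_eq_1[OF n] by simp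
  finally show ?thesis by simp
qed

lemma roots_poly_sum:
  fixes q :: "complex poly"
  assumes n: "n > 0" and e: "e > 0" and deg: "e + degree q < n"
  shows "(\<Sum>t\<in>{z::complex. z ^ n = 1}. t ^ e * poly q t) = 0"
proof -
  have "(\<Sum>t\<in>{z::complex. z ^ n = 1}. t ^ e * poly q t)
      = (\<Sum>t\<in>{z::complex. z ^ n = 1}. \<Sum>i\<le>degree q. coeff q i * t ^ (e + i))"
    by (simp add: poly_altdef sum_distrib_left power_add mult_ac)
  also have "\<dots> = (\<Sum>i\<le>degree q. coeff q i * (\<Sum>t\<in>{z::complex. z ^ n = 1}. t ^ (e + i)))"
    by (subst sum.swap) (simp add: sum_distrib_left)
  also have "\<dots> = 0"
  proof (intro sum.neutral ballI)
    fix i assume "i \<in> {..degree q}"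
    hence "0 < e + i" "e + i < n" using e deg by auto
    hence "\<not> n dvd (e + i)" by (meson nat_dvd_not_less)
    thus "coeff q i * (\<Sum>t\<in>{z::complex. z ^ n = 1}. t ^ (e + i)) = 0"
      using roots_sum_pow[OF n] by simp
  qed
  finally show ?thesis .
qed

lemma coeff_vanish:
  fixes C :: "'a set" and r :: "'a \<Rightarrow> nat" and H :: "'a \<Rightarrow> ('a \<Rightarrow> complex) \<Rightarrow> complex"
    and K :: complex and M D :: nat
  assumes fin: "finite C" and rM: "\<forall>I\<in>C. r I < M"
    and Hpoly: "\<forall>I\<in>C. \<forall>\<phi>. \<forall>J\<in>C. \<exists>q. degree q \<le> D \<and> (\<forall>t. H I (\<phi>(J:=t)) = poly q t)"
    and eq: "\<forall>\<phi>. K * (\<Prod>I\<in>C. \<phi> I ^ r I) = (\<Sum>I\<in>C. \<phi> I ^ M * H I \<phi>)"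
  shows "K = 0"
proof -
  define n where "n = M + D + 1"
  define U where "U = {z::complex. z ^ n = 1}"
  have n: "n > 0" by (simp add: n_def)
  have finU: "finite U" unfolding U_def using n by (intro finite_roots_unity) simp
  have U0: "0 \<notin> U" unfolding U_def using n by (simp add: zero_power)
  have cardU: "card U = n" unfolding U_def using card_roots_unity_eq[OF n] .
  define W where "W = (\<lambda>\<phi> :: 'a \<Rightarrow> complex. \<Prod>I\<in>C. inverse (\<phi> I) ^ r I)"
  define P where "P = Pi\<^sub>E C (\<lambda>_. U)"
  have finP: "finite P" unfolding P_def using fin finU by (intro finite_PiE) auto
  have cardP: "card P = n ^ card C" unfolding P_def using fin by (simp add: card_PiE cardU)
  have L1: "(\<Sum>\<phi>\<in>P. W \<phi> * (K * (\<Prod>I\<in>C. \<phi> I ^ r I))) = K * of_nat (card P)"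
  proof -
    have "W \<phi> * (K * (\<Prod>I\<in>C. \<phi> I ^ r I)) = K" if "\<phi> \<in> P" for \<phi> :: "'a \<Rightarrow> complex"
    proof -
      have "W \<phi> * (\<Prod>I\<in>C. \<phi> I ^ r I) = (\<Prod>I\<in>C. inverse (\<phi> I) ^ r I * \<phi> I ^ r I)"
        unfolding W_def by (simp add: prod.distrib)
      also have "\<dots> = 1"
      proof (intro prod.neutral ballI)
        fix I assume "I \<in> C"
        hence "\<phi> I \<in> U" using that unfolding P_def by (auto dest: PiE_mem)
        hence "\<phi> I \<noteq> 0" using U0 by auto
        thus "inverse (\<phi> I) ^ r I * \<phi> I ^ r I = 1" by (simp add: power_mult_distrib[symmetric])
      qed
      finally show ?thesis by (simp add: mult_ac)
    qed
    hence "(\<Sum>\<phi>\<in>P. W \<phi> * (K * (\<Prod>I\<in>C. \<phi> I ^ r I))) = (\<Sum>\<phi>\<in>P. K)" by (intro sum.cong) auto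
    thus ?thesis by simp
  qed
  have L2: "(\<Sum>\<phi>\<in>P. W \<phi> * (\<phi> a ^ M * H a \<phi>)) = 0" if a: "a \<in> C" for a
  proof -
    define C' where "C' = C - {a}"
    have C: "C = insert a C'" and aC': "a \<notin> C'" using a unfolding C'_def by auto
    have finC': "finite C'" using fin unfolding C'_def by simp
    define P' where "P' = Pi\<^sub>E C' (\<lambda>_. U)"
    have finP': "finite P'" unfolding P'_def using finC' finU by (intro finite_PiE) auto
    have Peq: "P = (\<lambda>(y, g). g(a := y)) ` (U \<times> P')"
      unfolding P_def P'_def C by (rule PiE_insert_eq)
    have inj: "inj_on (\<lambda>(y, g). g(a := y)) (U \<times> P')"
      unfolding P'_def using inj_combinator[OF aC', of "\<lambda>_. U"] by simp
    have "(\<Sum>\<phi>\<in>P. W \<phi> * (\<phi> a ^ M * H a \<phi>))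
        = (\<Sum>(t, g)\<in>U \<times> P'. W (g(a:=t)) * (t ^ M * H a (g(a:=t))))"
      unfolding Peq by (subst sum.reindex[OF inj]) (simp add: case_prod_beta)
    also have "\<dots> = (\<Sum>t\<in>U. \<Sum>g\<in>P'. W (g(a:=t)) * (t ^ M * H a (g(a:=t))))"
      by (rule sum.cartesian_product[symmetric])
    also have "\<dots> = (\<Sum>g\<in>P'. \<Sum>t\<in>U. W (g(a:=t)) * (t ^ M * H a (g(a:=t))))"
      by (rule sum.swap)
    also have "\<dots> = 0"
    proof -
    have inner: "(\<Sum>t\<in>U. W (g(a:=t)) * (t ^ M * H a (g(a:=t)))) = 0" for g
    proof -
      obtain q where q: "degree q \<le> D" "\<forall>t. H a (g(a:=t)) = poly q t"
        using Hpoly a by blast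
      define W' where "W' = (\<Prod>I\<in>C'. inverse (g I) ^ r I)"
      have "W (g(a:=t)) = inverse t ^ r a * W'" for t
      proof -
        have "W (g(a:=t)) = inverse ((g(a:=t)) a) ^ r a * (\<Prod>I\<in>C'. inverse ((g(a:=t)) I) ^ r I)"
          unfolding W_def C using finC' aC' by (simp add: prod.insert)
        also have "(\<Prod>I\<in>C'. inverse ((g(a:=t)) I) ^ r I) = W'"
          unfolding W'_def using aC' by (intro prod.cong) auto
        finally show ?thesis by (simp only: fun_upd_same)
      qed
      hence "(\<Sum>t\<in>U. W (g(a:=t)) * (t ^ M * H a (g(a:=t))))
          = (\<Sum>t\<in>U. W' * (inverse t ^ r a * t ^ M * poly q t))"
        using q(2) by (simp add: mult_ac)
      also have "\<dots> = W' * (\<Sum>t\<in>U. t ^ (M - r a) * poly q t)"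
      proof -
        have "inverse t ^ r a * t ^ M = t ^ (M - r a)" if "t \<in> U" for t
        proof -
          have t0: "t \<noteq> 0" using that U0 by auto
          have "r a \<le> M" using rM a by auto
          hence "t ^ M = t ^ (M - r a) * t ^ r a" by (simp flip: power_add)
          thus ?thesis using t0 by (simp add: power_inverse[symmetric] field_simps)
        qed
        thus ?thesis by (simp add: sum_distrib_left)
      qed
      moreover have "(\<Sum>t\<in>U. t ^ (M - r a) * poly q t) = 0"
        unfolding U_def using rM a q(1) by (intro roots_poly_sum[OF n]) (auto simp: n_def)
      ultimately show ?thesis by simp
    qed
    show ?thesis using inner by simp
    qed
    finally show ?thesis .
  qed
  have "K * of_nat (card P) = (\<Sum>\<phi>\<in>P. W \<phi> * (\<Sum>I\<in>C. \<phi> I ^ M * H I \<phi>))"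
    using L1 eq by simp
  also have "\<dots> = (\<Sum>I\<in>C. \<Sum>\<phi>\<in>P. W \<phi> * (\<phi> I ^ M * H I \<phi>))"
    by (simp add: sum_distrib_left sum.swap[of _ P])
  also have "\<dots> = 0" using L2 by simp
  finally have "K * of_nat (card P) = 0" .
  moreover have "card P \<noteq> 0" using cardP n by simp
  ultimately show ?thesis by simp
qed

definition linepoly :: "nat \<Rightarrow> nat \<Rightarrow> (complex vec \<Rightarrow> complex) \<Rightarrow> bool" where
  "linepoly N D F \<longleftrightarrow> (\<forall>x\<in>carrier_vec N. \<forall>w\<in>carrier_vec N.
      \<exists>q. degree q \<le> D \<and> (\<forall>t. F (x + t \<cdot>\<^sub>v w) = poly q t))"

lemma linepoly_mono: "linepoly N D F \<Longrightarrow> D \<le> D' \<Longrightarrow> linepoly N D' F"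
  unfolding linepoly_def by (meson order_trans)

lemma polyfun_linepoly: "p \<in> polyfun N \<Longrightarrow> \<exists>D. linepoly N D p"
proof (induction rule: polyfun.induct)
  case (const c)
  show ?case unfolding linepoly_def by (intro exI[of _ 0] ballI exI[of _ "[:c:]"]) simp
next
  case (coord i)
  have "linepoly N 1 (\<lambda>x. x $ i)" unfolding linepoly_def
  proof (intro ballI)
    fix x w :: "complex vec" assume "x \<in> carrier_vec N" "w \<in> carrier_vec N"
    thus "\<exists>q. degree q \<le> 1 \<and> (\<forall>t. (x + t \<cdot>\<^sub>v w) $ i = poly q t)" using coord
      by (intro exI[of _ "[:x $ i, w $ i:]"]) (auto simp: mult.commute)
  qed
  thus ?case by blast
next
  case (add p q)
  then obtain D1 D2 where d: "linepoly N D1 p" "linepoly N D2 q" by blast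
  have "linepoly N (D1 + D2) (\<lambda>x. p x + q x)" unfolding linepoly_def
  proof (intro ballI)
    fix x w :: "complex vec" assume xw: "x \<in> carrier_vec N" "w \<in> carrier_vec N"
    obtain q1 where q1: "degree q1 \<le> D1" "\<forall>t. p (x + t \<cdot>\<^sub>v w) = poly q1 t"
      using d(1) xw unfolding linepoly_def by blast
    obtain q2 where q2: "degree q2 \<le> D2" "\<forall>t. q (x + t \<cdot>\<^sub>v w) = poly q2 t"
      using d(2) xw unfolding linepoly_def by blast
    have "degree (q1 + q2) \<le> D1 + D2"
      using degree_add_le[of q1 "D1 + D2" q2] q1 q2 by auto
    thus "\<exists>r. degree r \<le> D1 + D2 \<and> (\<forall>t. p (x + t \<cdot>\<^sub>v w) + q (x + t \<cdot>\<^sub>v w) = poly r t)"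
      using q1 q2 by (intro exI[of _ "q1 + q2"]) simp
  qed
  thus ?case by blast
next
  case (mult p q)
  then obtain D1 D2 where d: "linepoly N D1 p" "linepoly N D2 q" by blast
  have "linepoly N (D1 + D2) (\<lambda>x. p x * q x)" unfolding linepoly_def
  proof (intro ballI)
    fix x w :: "complex vec" assume xw: "x \<in> carrier_vec N" "w \<in> carrier_vec N"
    obtain q1 where q1: "degree q1 \<le> D1" "\<forall>t. p (x + t \<cdot>\<^sub>v w) = poly q1 t"
      using d(1) xw unfolding linepoly_def by blast
    obtain q2 where q2: "degree q2 \<le> D2" "\<forall>t. q (x + t \<cdot>\<^sub>v w) = poly q2 t"
      using d(2) xw unfolding linepoly_def by blast
    have "degree (q1 * q2) \<le> D1 + D2"
      using degree_mult_le[of q1 q2] q1 q2 by auto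
    thus "\<exists>r. degree r \<le> D1 + D2 \<and> (\<forall>t. p (x + t \<cdot>\<^sub>v w) * q (x + t \<cdot>\<^sub>v w) = poly r t)"
      using q1 q2 by (intro exI[of _ "q1 * q2"]) simp
  qed
  thus ?case by blast
qed

lemma list_linepoly: "set hs \<subseteq> polyfun N \<Longrightarrow> \<exists>D. \<forall>h\<in>set hs. linepoly N D h"
proof (induction hs)
  case (Cons h hs)
  then obtain D1 where D1: "\<forall>h\<in>set hs. linepoly N D1 h" by auto
  have "h \<in> polyfun N" using Cons.prems by simp
  then obtain D2 where D2: "linepoly N D2 h" using polyfun_linepoly by blast
  have "\<forall>h'\<in>set (h # hs). linepoly N (D1 + D2) h'"
    using D1 D2 linepoly_mono by (auto intro: linepoly_mono)
  thus ?case by blast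
qed simp

lemma sum_poly_deg:
  fixes n D :: nat and f :: "nat \<Rightarrow> complex \<Rightarrow> complex"
  shows "(\<forall>i<n. \<exists>q. degree q \<le> D \<and> (\<forall>t. f i t = poly q t)) \<Longrightarrow>
   \<exists>q. degree q \<le> D \<and> (\<forall>t. (\<Sum>i<n. f i t) = poly q t)"
proof (induction n)
  case 0
  show ?case by (intro exI[of _ 0]) simp
next
  case (Suc n)
  then obtain q1 where q1: "degree q1 \<le> D" "\<forall>t. (\<Sum>i<n. f i t) = poly q1 t" by auto
  obtain q2 where q2: "degree q2 \<le> D" "\<forall>t. f n t = poly q2 t" using Suc.prems by auto
  have "degree (q1 + q2) \<le> D" using degree_add_le q1 q2 by blast
  thus ?case using q1 q2 by (intro exI[of _ "q1 + q2"]) simp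
qed

lemma dir_deriv_fermat:
  assumes x: "x \<in> carrier_vec N" and w: "w \<in> carrier_vec N"
  shows "dir_deriv N (fermat N) w x = (\<Sum>i<N. of_nat N * (x $ i) ^ (N - 1) * w $ i)"
proof -
  have eq: "(\<lambda>t. fermat N (x + t \<cdot>\<^sub>v w)) = (\<lambda>t. \<Sum>i<N. (x $ i + t * w $ i) ^ N)"
    using x w by (auto simp: fermat_def intro!: sum.cong)
  have d: "((\<lambda>t. \<Sum>i<N. (x $ i + t * w $ i) ^ N) has_field_derivative
            (\<Sum>i<N. of_nat N * (x $ i + 0 * w $ i) ^ (N - 1) * w $ i)) (at 0)"
    by (auto intro!: derivative_eq_intros sum.cong)
  show ?thesis unfolding dir_deriv_def eq
  proof (rule the_equality)
    show "((\<lambda>t. \<Sum>i<N. (x $ i + t * w $ i) ^ N) has_field_derivative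
            (\<Sum>i<N. of_nat N * (x $ i) ^ (N - 1) * w $ i)) (at 0)" using d by simp
    thus "\<And>D. ((\<lambda>t. \<Sum>i<N. (x $ i + t * w $ i) ^ N) has_field_derivative D) (at 0) \<Longrightarrow>
           D = (\<Sum>i<N. of_nat N * (x $ i) ^ (N - 1) * w $ i)"
      using DERIV_unique by blast
  qed
qed

lemma vsum_carrier_index:
  assumes "set ys \<subseteq> carrier_vec N"
  shows "vsum N ys \<in> carrier_vec N \<and> (\<forall>l<N. vsum N ys $ l = (\<Sum>y\<leftarrow>ys. y $ l))"
  using assms by (induction ys) (auto simp: vsum_def)

lemma vsum_carrier: "set ys \<subseteq> carrier_vec N \<Longrightarrow> vsum N ys \<in> carrier_vec N"
  using vsum_carrier_index by blast

lemma vsum_index: "set ys \<subseteq> carrier_vec N \<Longrightarrow> l < N \<Longrightarrow> vsum N ys $ l = (\<Sum>y\<leftarrow>ys. y $ l)"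
  using vsum_carrier_index by blast

lemma lincomb_carrier: "set bs \<subseteq> carrier_vec N \<Longrightarrow> lincomb N c bs \<in> carrier_vec N"
  unfolding lincomb_def by (rule vsum_carrier) (auto simp: nth_mem subsetD)

lemma lincomb_index:
  assumes "set bs \<subseteq> carrier_vec N" "l < N"
  shows "lincomb N c bs $ l = (\<Sum>i<length bs. c i * bs ! i $ l)"
proof -
  have "lincomb N c bs $ l = (\<Sum>y\<leftarrow>map (\<lambda>i. c i \<cdot>\<^sub>v bs ! i) [0..<length bs]. y $ l)"
    unfolding lincomb_def using assms by (intro vsum_index) (auto simp: nth_mem subsetD)
  also have "\<dots> = (\<Sum>i\<leftarrow>[0..<length bs]. c i * bs ! i $ l)"
  proof -
    have "(c i \<cdot>\<^sub>v bs ! i) $ l = c i * bs ! i $ l" if "i < length bs" for i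
    proof -
      have "bs ! i \<in> carrier_vec N" using assms that nth_mem by blast
      hence "dim_vec (bs ! i) = N" by auto
      thus ?thesis using assms(2) by (simp only: index_smult_vec)
    qed
    hence "map (\<lambda>y. y $ l) (map (\<lambda>i. c i \<cdot>\<^sub>v bs ! i) [0..<length bs]) = map (\<lambda>i. c i * bs ! i $ l) [0..<length bs]"
      by (auto intro!: map_cong)
    thus ?thesis by metis

  qed
  also have "\<dots> = (\<Sum>i<length bs. c i * bs ! i $ l)"
    by (simp add: sum_set_upt_conv_sum_list_nat[symmetric] atLeast0LessThan)
  finally show ?thesis .
qed

lemma lincomb_mat:
  assumes bs: "set bs \<subseteq> carrier_vec N"
  shows "lincomb N c bs = mat_of_cols N bs *\<^sub>v vec (length bs) c"
proof (rule eq_vecI)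
  show "dim_vec (lincomb N c bs) = dim_vec (mat_of_cols N bs *\<^sub>v vec (length bs) c)"
    using lincomb_carrier[OF bs] by simp
  fix l assume "l < dim_vec (mat_of_cols N bs *\<^sub>v vec (length bs) c)"
  hence l: "l < N" by simp
  have "(mat_of_cols N bs *\<^sub>v vec (length bs) c) $ l = (\<Sum>i<length bs. bs ! i $ l * c i)"
    using l by (simp add: scalar_prod_def mat_of_cols_index atLeast0LessThan row_def)
  thus "lincomb N c bs $ l = (mat_of_cols N bs *\<^sub>v vec (length bs) c) $ l"
    using lincomb_index[OF bs l] by (simp add: mult.commute)
qed

lemma mat_inj_cancel:
  fixes B :: "complex mat"
  assumes B: "B \<in> carrier_mat N L"
    and inj: "\<forall>u\<in>carrier_vec L. B *\<^sub>v u = 0\<^sub>v N \<longrightarrow> u = 0\<^sub>v L"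
    and X: "X \<in> carrier_mat L n" and Y: "Y \<in> carrier_mat L n"
    and eq: "B * X = B * Y"
  shows "X = Y"
proof (rule mat_col_eqI)
  fix j assume "j < dim_col Y"
  hence j: "j < n" using Y by simp
  have cX: "col X j \<in> carrier_vec L" using X j by simp
  have cY: "col Y j \<in> carrier_vec L" using Y j by simp
  have e1: "col (B * X) j = B *\<^sub>v col X j" by (rule col_mult2[OF B X j])
  have e2: "col (B * Y) j = B *\<^sub>v col Y j" by (rule col_mult2[OF B Y j])
  have e3: "B *\<^sub>v col X j = B *\<^sub>v col Y j" using eq e1 e2 by metis
  have "B *\<^sub>v (col X j - col Y j) = B *\<^sub>v col X j - B *\<^sub>v col Y j"
    by (rule mult_minus_distrib_mat_vec[OF B cX cY])
  also have "\<dots> = 0\<^sub>v N" unfolding e3 by (rule minus_cancel_vec) (use B cY in simp)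
  finally have "B *\<^sub>v (col X j - col Y j) = 0\<^sub>v N" .
  moreover have "col X j - col Y j \<in> carrier_vec L" using cX cY by simp
  ultimately have z: "col X j - col Y j = 0\<^sub>v L" using inj by blast
  show "col X j = col Y j"
  proof (rule eq_vecI)
    fix i assume "i < dim_vec (col Y j)"
    hence i: "i < L" using Y by simp
    have z0: "(col X j - col Y j) $ i = 0" using z i by simp
    have d: "(col X j - col Y j) $ i = col X j $ i - col Y j $ i"
      by (rule index_minus_vec) (use i Y in auto)
    show "col X j $ i = col Y j $ i" using d z0 by simp
  qed (use X Y in simp)
qed (use X Y in simp_all)

lemma dim_from_inverse:
  fixes P Q :: "complex mat"
  assumes P: "P \<in> carrier_mat n m" and Q: "Q \<in> carrier_mat m n" and PQ: "P * Q = 1\<^sub>m n"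
  shows "n \<le> m"
proof (rule ccontr)
  assume "\<not> n \<le> m"
  hence mn: "m < n" by simp
  define P' where "P' = mat n n (\<lambda>(i,j). if j < m then P $$ (i,j) else 0)"
  define Q' where "Q' = mat n n (\<lambda>(i,j). if i < m then Q $$ (i,j) else 0)"
  have P': "P' \<in> carrier_mat n n" and Q': "Q' \<in> carrier_mat n n" unfolding P'_def Q'_def by auto
  have "P' * Q' = 1\<^sub>m n"
  proof (rule eq_matI)
    fix i j assume ij: "i < dim_row (1\<^sub>m n)" "j < dim_col (1\<^sub>m n)"
    have "(P' * Q') $$ (i,j) = (\<Sum>k<n. P' $$ (i,k) * Q' $$ (k,j))"
      using ij P' Q' by (simp add: scalar_prod_def atLeast0LessThan row_def col_def)
    also have "\<dots> = (\<Sum>k<m. P $$ (i,k) * Q $$ (k,j))"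
    proof -
      have "(\<Sum>k<n. P' $$ (i,k) * Q' $$ (k,j)) = (\<Sum>k<m. P' $$ (i,k) * Q' $$ (k,j))"
        using mn ij by (intro sum.mono_neutral_right) (auto simp: P'_def Q'_def)
      also have "\<dots> = (\<Sum>k<m. P $$ (i,k) * Q $$ (k,j))"
        using mn ij by (intro sum.cong) (auto simp: P'_def Q'_def)
      finally show ?thesis .
    qed
    also have "\<dots> = (P * Q) $$ (i,j)"
      using ij P Q by (simp add: scalar_prod_def atLeast0LessThan row_def col_def)
    finally show "(P' * Q') $$ (i,j) = 1\<^sub>m n $$ (i,j)" using PQ by simp
  qed (use P' Q' in auto)
  hence "Q' * P' = 1\<^sub>m n" using mat_mult_left_right_inverse[OF P' Q'] by simp
  hence "(Q' * P') $$ (n - 1, n - 1) = 1" using mn by simp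
  moreover have "(Q' * P') $$ (n - 1, n - 1) = (\<Sum>k<n. Q' $$ (n - 1,k) * P' $$ (k,n - 1))"
    using mn P' Q' by (simp add: scalar_prod_def atLeast0LessThan row_def col_def)
  moreover have "\<dots> = 0" using mn by (intro sum.neutral) (auto simp: Q'_def)
  ultimately show False by simp
qed

lemma basis_inj:
  assumes b: "is_basis N bs W"
  shows "\<forall>u\<in>carrier_vec (length bs). mat_of_cols N bs *\<^sub>v u = 0\<^sub>v N \<longrightarrow> u = 0\<^sub>v (length bs)"
proof (intro ballI impI)
  fix u :: "complex vec" assume u: "u \<in> carrier_vec (length bs)" and z: "mat_of_cols N bs *\<^sub>v u = 0\<^sub>v N"
  have bs: "set bs \<subseteq> carrier_vec N" using b unfolding is_basis_def by blast
  have uv: "vec (length bs) (\<lambda>i. u $ i) = u" using u by auto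
  have "lincomb N (\<lambda>i. u $ i) bs = 0\<^sub>v N" using z uv lincomb_mat[OF bs] by metis
  hence "\<forall>i<length bs. u $ i = 0" using b unfolding is_basis_def by blast
  thus "u = 0\<^sub>v (length bs)" using u by auto
qed

lemma basis_W:
  assumes b: "is_basis N bs W"
  shows "W = {mat_of_cols N bs *\<^sub>v u | u. u \<in> carrier_vec (length bs)}"
proof -
  have bs: "set bs \<subseteq> carrier_vec N" using b unfolding is_basis_def by blast
  have W: "W = {lincomb N c bs | c. True}" using b unfolding is_basis_def by blast
  show ?thesis unfolding W lincomb_mat[OF bs]
  proof safe
    fix c show "\<exists>u. mat_of_cols N bs *\<^sub>v vec (length bs) c = mat_of_cols N bs *\<^sub>v u \<and> u \<in> carrier_vec (length bs)"
      by auto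
  next
    fix u :: "complex vec" assume u: "u \<in> carrier_vec (length bs)"
    hence "vec (length bs) (\<lambda>i. u $ i) = u" by auto
    thus "\<exists>c. mat_of_cols N bs *\<^sub>v u = mat_of_cols N bs *\<^sub>v vec (length bs) c \<and> True" by metis
  qed
qed

lemma basis_mem:
  assumes b: "is_basis N bs W" and j: "j < length bs"
  shows "bs ! j \<in> W"
proof -
  have bs: "set bs \<subseteq> carrier_vec N" using b unfolding is_basis_def by blast
  have W: "W = {lincomb N c bs | c. True}" using b unfolding is_basis_def by blast
  have bj: "bs ! j \<in> carrier_vec N" using bs j nth_mem by blast
  have "lincomb N (\<lambda>i. if i = j then 1 else 0) bs = bs ! j"
  proof (rule eq_vecI)
    fix l assume "l < dim_vec (bs ! j)"
    hence l: "l < N" using bj by simp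
    have "lincomb N (\<lambda>i. if i = j then 1 else 0) bs $ l = (\<Sum>i<length bs. (if i = j then 1 else 0) * bs ! i $ l)"
      by (rule lincomb_index[OF bs l])
    also have "\<dots> = (\<Sum>i<length bs. if i = j then bs ! i $ l else 0)"
      by (intro sum.cong) auto
    also have "\<dots> = bs ! j $ l" using j by simp
    finally show "lincomb N (\<lambda>i. if i = j then 1 else 0) bs $ l = bs ! j $ l" .
  qed (use lincomb_carrier[OF bs] bj in simp)
  thus ?thesis unfolding W by (metis (mono_tags, lifting) mem_Collect_eq)
qed

lemma basis_change:
  assumes b: "is_basis N bs W" and b0: "is_basis N bs0 W"
  obtains P where "P \<in> carrier_mat (length bs0) (length bs)"
    "mat_of_cols N bs = mat_of_cols N bs0 * P"
proof -
  have bs: "set bs \<subseteq> carrier_vec N" using b unfolding is_basis_def by blast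
  have "\<forall>j<length bs. \<exists>u. u \<in> carrier_vec (length bs0) \<and> bs ! j = mat_of_cols N bs0 *\<^sub>v u"
    using basis_mem[OF b] basis_W[OF b0] by blast
  then obtain p where p: "\<forall>j<length bs. p j \<in> carrier_vec (length bs0) \<and> bs ! j = mat_of_cols N bs0 *\<^sub>v p j"
    by metis
  define P where "P = mat (length bs0) (length bs) (\<lambda>(i,j). p j $ i)"
  have P: "P \<in> carrier_mat (length bs0) (length bs)" unfolding P_def by simp
  have "mat_of_cols N bs = mat_of_cols N bs0 * P"
  proof (rule mat_col_eqI)
    fix j assume "j < dim_col (mat_of_cols N bs0 * P)"
    hence j: "j < length bs" using P by simp
    have pj: "p j \<in> carrier_vec (length bs0)" using p j by blast
    have "col P j = vec (length bs0) (\<lambda>i. p j $ i)" unfolding P_def using j by simp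
    also have "\<dots> = p j" using pj by (intro eq_vecI) auto
    finally have colP: "col P j = p j" .
    have B0c: "mat_of_cols N bs0 \<in> carrier_mat N (length bs0)" by simp
    have "col (mat_of_cols N bs0 * P) j = mat_of_cols N bs0 *\<^sub>v col P j"
      by (rule col_mult2[OF B0c P j])
    also have "\<dots> = bs ! j" using colP p j by simp
    also have "\<dots> = col (mat_of_cols N bs) j" using j bs nth_mem by (metis col_mat_of_cols subsetD)
    finally show "col (mat_of_cols N bs) j = col (mat_of_cols N bs0 * P) j" by simp
  qed (use P in simp_all)
  thus ?thesis using P that by blast
qed

lemma basis_rep:
  assumes b: "is_basis N bs W" and v: "v \<in> carrier_mat N N"
    and A: "A \<in> carrier_mat (length bs) (length bs)"
    and Ah: "\<forall>j<length bs. v *\<^sub>v bs ! j = lincomb N (\<lambda>i. A $$ (i, j)) bs"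
  shows "v * mat_of_cols N bs = mat_of_cols N bs * A"
proof (rule mat_col_eqI)
  have bs: "set bs \<subseteq> carrier_vec N" using b unfolding is_basis_def by blast
  fix j assume "j < dim_col (mat_of_cols N bs * A)"
  hence j: "j < length bs" using A by simp
  have bj: "bs ! j \<in> carrier_vec N" using bs j nth_mem by blast
  have Bc: "mat_of_cols N bs \<in> carrier_mat N (length bs)" by simp
  have "col (v * mat_of_cols N bs) j = v *\<^sub>v col (mat_of_cols N bs) j"
    by (rule col_mult2[OF v Bc j])
  also have "\<dots> = v *\<^sub>v bs ! j" using j bj by simp
  also have "\<dots> = mat_of_cols N bs *\<^sub>v vec (length bs) (\<lambda>i. A $$ (i, j))"
    using Ah j lincomb_mat[OF bs] by simp
  also have "vec (length bs) (\<lambda>i. A $$ (i, j)) = col A j" using A j by (auto simp: col_def)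
  also have "mat_of_cols N bs *\<^sub>v col A j = col (mat_of_cols N bs * A) j"
    by (rule col_mult2[OF Bc A j, symmetric])
  finally show "col (v * mat_of_cols N bs) j = col (mat_of_cols N bs * A) j" .
qed (use A v in simp_all)

lemma det_basis_indep:
  assumes b: "is_basis N bs W" and b0: "is_basis N bs0 W"
    and v: "v \<in> carrier_mat N N"
    and A: "A \<in> carrier_mat (length bs) (length bs)"
    and Ah: "\<forall>j<length bs. v *\<^sub>v bs ! j = lincomb N (\<lambda>i. A $$ (i, j)) bs"
    and A0: "A0 \<in> carrier_mat (length bs0) (length bs0)"
    and A0h: "\<forall>j<length bs0. v *\<^sub>v bs0 ! j = lincomb N (\<lambda>i. A0 $$ (i, j)) bs0"
  shows "det A = det A0"
proof -
  define L where "L = length bs"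
  define L0 where "L0 = length bs0"
  define B where "B = mat_of_cols N bs"
  define B0 where "B0 = mat_of_cols N bs0"
  have B: "B \<in> carrier_mat N L" and B0: "B0 \<in> carrier_mat N L0"
    unfolding B_def B0_def L_def L0_def by auto
  have injB: "\<forall>u\<in>carrier_vec L. B *\<^sub>v u = 0\<^sub>v N \<longrightarrow> u = 0\<^sub>v L"
    unfolding B_def L_def by (rule basis_inj[OF b])
  have injB0: "\<forall>u\<in>carrier_vec L0. B0 *\<^sub>v u = 0\<^sub>v N \<longrightarrow> u = 0\<^sub>v L0"
    unfolding B0_def L0_def by (rule basis_inj[OF b0])
  obtain P where P: "P \<in> carrier_mat L0 L" and BP: "B = B0 * P"
    using basis_change[OF b b0] unfolding B_def B0_def L_def L0_def by blast
  obtain Q where Q: "Q \<in> carrier_mat L L0" and BQ: "B0 = B * Q"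
    using basis_change[OF b0 b] unfolding B_def B0_def L_def L0_def by blast
  have "B0 * (P * Q) = B0 * 1\<^sub>m L0"
  proof -
    have "B0 * (P * Q) = (B0 * P) * Q" using B0 P Q by simp
    also have "\<dots> = B0" using BP BQ by simp
    finally show ?thesis using B0 by simp
  qed
  hence PQ: "P * Q = 1\<^sub>m L0" using mat_inj_cancel[OF B0 injB0] P Q by (meson mult_carrier_mat one_carrier_mat)
  have "B * (Q * P) = B * 1\<^sub>m L"
  proof -
    have "B * (Q * P) = (B * Q) * P" using B P Q by simp
    also have "\<dots> = B" using BP BQ by simp
    finally show ?thesis using B by simp
  qed
  hence QP: "Q * P = 1\<^sub>m L" using mat_inj_cancel[OF B injB] P Q by (meson mult_carrier_mat one_carrier_mat)
  have "L0 \<le> L" by (rule dim_from_inverse[OF P Q PQ])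
  moreover have "L \<le> L0" by (rule dim_from_inverse[OF Q P QP])
  ultimately have LL: "L0 = L" by simp
  have vB: "v * B = B * A" unfolding B_def by (rule basis_rep[OF b v A Ah])
  have vB0: "v * B0 = B0 * A0" unfolding B0_def by (rule basis_rep[OF b0 v A0 A0h])
  have A': "A \<in> carrier_mat L L" using A unfolding L_def .
  have A0': "A0 \<in> carrier_mat L L" using A0 LL unfolding L0_def by simp
  have P': "P \<in> carrier_mat L L" and Q': "Q \<in> carrier_mat L L" using P Q LL by auto
  have "B * A = B * (Q * (A0 * P))"
  proof -
    have "B * A = v * B" using vB by simp
    also have "\<dots> = (v * B0) * P" using BP v B0 P by simp
    also have "\<dots> = (B0 * A0) * P" using vB0 by simp
    also have "\<dots> = ((B * Q) * A0) * P" using BQ by simp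
    also have "\<dots> = B * (Q * (A0 * P))"
    proof -
      have "(B * Q) * A0 = B * (Q * A0)" by (rule assoc_mult_mat[OF B Q' A0'])
      moreover have "(B * (Q * A0)) * P = B * ((Q * A0) * P)"
        by (rule assoc_mult_mat[OF B _ P']) (use Q' A0' in simp)
      moreover have "(Q * A0) * P = Q * (A0 * P)" by (rule assoc_mult_mat[OF Q' A0' P'])
      ultimately show ?thesis by simp
    qed
    finally show ?thesis .
  qed
  hence "A = Q * (A0 * P)" using mat_inj_cancel[OF B injB A'] Q' A0' P' by (meson mult_carrier_mat)
  hence "det A = det Q * (det A0 * det P)" using det_mult Q' A0' P' by (metis mult_carrier_mat)
  also have "det Q * det P = 1" using det_mult[OF Q' P'] QP by simp
  hence "det Q * (det A0 * det P) = det A0" by (metis mult.commute mult.left_commute mult_1)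
  finally show ?thesis .
qed

definition cyc :: "(nat \<Rightarrow> nat) \<Rightarrow> nat \<Rightarrow> nat set" where
  "cyc \<sigma> i = {(\<sigma> ^^ k) i | k. True}"

locale pctx =
  fixes N :: nat and \<sigma> :: "nat \<Rightarrow> nat"
  assumes perm: "\<sigma> permutes {..<N}"
begin

abbreviation hinv where "hinv \<equiv> Hilbert_Choice.inv"

lemma sig_lt: "x < N \<Longrightarrow> \<sigma> x < N"
  using permutes_in_image[OF perm, of x] by auto

lemma funpow_lt: "i < N \<Longrightarrow> (\<sigma> ^^ k) i < N"
  by (induction k) (auto simp: sig_lt)

lemma funpow_out: "\<not> i < N \<Longrightarrow> (\<sigma> ^^ k) i = i"
  by (induction k) (auto simp: permutes_not_in[OF perm])

lemma cyc_sub: "i < N \<Longrightarrow> cyc \<sigma> i \<subseteq> {..<N}"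
  by (auto simp: cyc_def funpow_lt)

lemma cyc_finite: "i < N \<Longrightarrow> finite (cyc \<sigma> i)"
  using cyc_sub finite_subset by blast

lemma period_pt: "\<exists>n>0. (\<sigma> ^^ n) x = x"
proof (cases "x < N")
  case True
  have "{y. \<exists>n. y = (\<sigma> ^^ n) x} \<subseteq> {..<N}" using funpow_lt True by auto
  hence fin: "finite {y. \<exists>n. y = (\<sigma> ^^ n) x}" by (rule finite_subset) simp
  obtain n where "n>0" "(\<sigma> ^^ n) x = x"
    using funpow_inj_finite[OF permutes_inj[OF perm] fin] by blast
  thus ?thesis by blast
next
  case False thus ?thesis using funpow_out[OF False, of 1] by (intro exI[of _ 1]) auto
qed

lemma funpow_mult_fix: "(\<sigma> ^^ n) x = x \<Longrightarrow> (\<sigma> ^^ (n * k)) x = x"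
proof (induction k)
  case (Suc k)
  have "(\<sigma> ^^ (n * Suc k)) x = (\<sigma> ^^ n) ((\<sigma> ^^ (n * k)) x)"
    by (simp add: funpow_add)
  thus ?case using Suc by simp
qed simp

definition per where "per = (\<Prod>x<N. SOME n. n > 0 \<and> (\<sigma> ^^ n) x = x)"

lemma per_some: "(SOME n. n > 0 \<and> (\<sigma> ^^ n) x = x) > 0 \<and> (\<sigma> ^^ (SOME n. n > 0 \<and> (\<sigma> ^^ n) x = x)) x = x"
  using someI_ex[OF period_pt[of x]] by blast

lemma per_pos: "per > 0"
  unfolding per_def by (rule prod_pos) (use per_some in blast)

lemma per_id_pt: "(\<sigma> ^^ per) x = x"
proof (cases "x < N")
  case True
  define s where "s = (SOME n. n > 0 \<and> (\<sigma> ^^ n) x = x)"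
  have "per = s * (\<Prod>y\<in>{..<N}-{x}. SOME n. n > 0 \<and> (\<sigma> ^^ n) y = y)"
    unfolding per_def s_def using True by (subst prod.remove[of _ x]) auto
  moreover have "(\<sigma> ^^ s) x = x" using per_some unfolding s_def by blast
  ultimately show ?thesis using funpow_mult_fix by presburger
qed (simp add: funpow_out)

lemma per_id: "\<sigma> ^^ per = id"
  by (rule ext) (simp add: per_id_pt)

lemma self_in: "i \<in> cyc \<sigma> i"
  unfolding cyc_def by (auto intro: exI[of _ 0])

lemma cyc_eq: assumes "j \<in> cyc \<sigma> i" shows "cyc \<sigma> j = cyc \<sigma> i"
proof -
  obtain k where k: "j = (\<sigma> ^^ k) i" using assms unfolding cyc_def by auto
  have i: "i = (\<sigma> ^^ (per * k - k)) j"
  proof -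
    have "per * k \<ge> k" using per_pos by simp
    have "(\<sigma> ^^ (per * k - k)) j = (\<sigma> ^^ (per * k - k + k)) i"
      by (simp add: k funpow_add)
    hence "(\<sigma> ^^ (per * k - k)) j = (\<sigma> ^^ (per * k)) i"
      using \<open>per * k \<ge> k\<close> by simp
    also have "\<dots> = i" using funpow_mult_fix per_id_pt by blast
    finally show ?thesis by simp
  qed
  show ?thesis
  proof
    show "cyc \<sigma> j \<subseteq> cyc \<sigma> i"
    proof
      fix x assume "x \<in> cyc \<sigma> j"
      then obtain l where "x = (\<sigma> ^^ l) j" unfolding cyc_def by auto
      hence "x = (\<sigma> ^^ (l + k)) i" by (simp add: k funpow_add)
      thus "x \<in> cyc \<sigma> i" unfolding cyc_def by blast
    qed
    show "cyc \<sigma> i \<subseteq> cyc \<sigma> j"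
    proof
      fix x assume "x \<in> cyc \<sigma> i"
      then obtain l where "x = (\<sigma> ^^ l) i" unfolding cyc_def by auto
      hence "x = (\<sigma> ^^ l) ((\<sigma> ^^ (per * k - k)) j)" using i by simp
      hence "x = (\<sigma> ^^ (l + (per * k - k))) j" by (simp add: funpow_add)
      thus "x \<in> cyc \<sigma> j" unfolding cyc_def by blast
    qed
  qed
qed

lemma cyc_step: "\<sigma> j \<in> cyc \<sigma> i \<longleftrightarrow> j \<in> cyc \<sigma> i"
proof
  assume "j \<in> cyc \<sigma> i"
  then obtain k where "j = (\<sigma> ^^ k) i" unfolding cyc_def by auto
  hence "\<sigma> j = (\<sigma> ^^ Suc k) i" by simp
  thus "\<sigma> j \<in> cyc \<sigma> i" unfolding cyc_def by blast
next
  assume a: "\<sigma> j \<in> cyc \<sigma> i"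
  have "(\<sigma> ^^ (per - 1)) (\<sigma> j) = (\<sigma> ^^ per) j"
    using per_pos by (metis Suc_diff_1 funpow_Suc_right o_apply)
  hence "j = (\<sigma> ^^ (per - 1)) (\<sigma> j)" using per_id_pt by simp
  hence "j \<in> cyc \<sigma> (\<sigma> j)" unfolding cyc_def by blast
  thus "j \<in> cyc \<sigma> i" using cyc_eq[OF a] by simp
qed

lemma inv_in: "hinv \<sigma> l \<in> cyc \<sigma> l"
  using cyc_step[of "hinv \<sigma> l" l] self_in permutes_inverses[OF perm] by simp

lemma cyc_funpow: "(\<sigma> ^^ k) j \<in> cyc \<sigma> i \<longleftrightarrow> j \<in> cyc \<sigma> i"
  by (induction k) (auto simp: cyc_step)

lemma cyc_mem_iff: "k \<in> cyc \<sigma> i \<longleftrightarrow> cyc \<sigma> k = cyc \<sigma> i"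
  using cyc_eq self_in by metis

lemma supports_eq: "cycle_supports N \<sigma> = cyc \<sigma> ` {..<N}"
  unfolding cycle_supports_def cyc_def by auto

lemma perm_mat_mult_vec:
  assumes "y \<in> carrier_vec N" "l < N"
  shows "(perm_mat N \<sigma> *\<^sub>v y) $ l = y $ (hinv \<sigma> l)"
proof -
  have "(perm_mat N \<sigma> *\<^sub>v y) $ l = (\<Sum>j<N. (if l = \<sigma> j then 1 else 0) * y $ j)"
    using assms by (simp add: perm_mat_def scalar_prod_def row_def atLeast0LessThan)
  also have "\<dots> = (\<Sum>j<N. if j = hinv \<sigma> l then y $ j else 0)"
  proof (intro sum.cong refl)
    fix j
    have "(l = \<sigma> j) = (j = hinv \<sigma> l)" using permutes_inv_eq[OF perm] by metis
    thus "(if l = \<sigma> j then 1 else 0) * y $ j = (if j = hinv \<sigma> l then y $ j else 0)" by simp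
  qed
  also have "\<dots> = y $ (hinv \<sigma> l)"
    using assms permutes_in_image[OF permutes_inv[OF perm]] by simp
  finally show ?thesis .
qed


abbreviation "PM \<equiv> perm_mat N \<sigma>"
abbreviation "MS \<equiv> Mspace N PM"

lemma PM_carrier: "PM \<in> carrier_mat N N" by (simp add: perm_mat_def)

lemma Mspace_carrier: "x \<in> MS \<Longrightarrow> x \<in> carrier_vec N"
  unfolding Mspace_def using vsum_carrier by blast

lemma Mspace_zero: "0\<^sub>v N \<in> MS"
  unfolding Mspace_def by (rule CollectI, rule exI[of _ "[]"]) (simp add: vsum_def)

lemma Mspace_eig: assumes "y \<in> carrier_vec N" "PM *\<^sub>v y = c \<cdot>\<^sub>v y" "c \<noteq> 1"
  shows "y \<in> MS"
proof -
  have "vsum N [y] = y" using assms(1) by (simp add: vsum_def)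
  thus ?thesis unfolding Mspace_def using assms by (intro CollectI exI[of _ "[y]"]) auto
qed

lemma Mspace_add: assumes x: "x \<in> MS" and y: "y \<in> MS" shows "x + y \<in> MS"
proof -
  obtain xs where xs: "x = vsum N xs" "\<forall>z\<in>set xs. z \<in> carrier_vec N \<and> (\<exists>c. c \<noteq> 1 \<and> PM *\<^sub>v z = c \<cdot>\<^sub>v z)"
    using x unfolding Mspace_def by blast
  obtain ys where ys: "y = vsum N ys" "\<forall>z\<in>set ys. z \<in> carrier_vec N \<and> (\<exists>c. c \<noteq> 1 \<and> PM *\<^sub>v z = c \<cdot>\<^sub>v z)"
    using y unfolding Mspace_def by blast
  have cx: "set xs \<subseteq> carrier_vec N" and cy: "set ys \<subseteq> carrier_vec N" using xs ys by auto
  have "vsum N (xs @ ys) = x + y"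
  proof (rule eq_vecI)
    have c1: "vsum N (xs @ ys) \<in> carrier_vec N" by (rule vsum_carrier) (use cx cy in auto)
    have c2: "x \<in> carrier_vec N" "y \<in> carrier_vec N" using xs(1) ys(1) vsum_carrier cx cy by auto
    show "dim_vec (vsum N (xs @ ys)) = dim_vec (x + y)" using c1 c2 by simp
    fix l assume "l < dim_vec (x + y)"
    hence l: "l < N" using c2 by simp
    have "(x + y) $ l = x $ l + y $ l" using c2 l by simp
    thus "vsum N (xs @ ys) $ l = (x + y) $ l"
      using vsum_index[of "xs @ ys" N l] vsum_index[OF cx l] vsum_index[OF cy l] cx cy l xs(1) ys(1)
      by simp
  qed
  thus ?thesis unfolding Mspace_def using xs ys by (intro CollectI exI[of _ "xs @ ys"]) auto
qed

lemma Mspace_smult: assumes x: "x \<in> MS" shows "a \<cdot>\<^sub>v x \<in> MS"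
proof -
  obtain xs where xs: "x = vsum N xs" "\<forall>z\<in>set xs. z \<in> carrier_vec N \<and> (\<exists>c. c \<noteq> 1 \<and> PM *\<^sub>v z = c \<cdot>\<^sub>v z)"
    using x unfolding Mspace_def by blast
  have cx: "set xs \<subseteq> carrier_vec N" using xs by auto
  define ys where "ys = map (\<lambda>z. a \<cdot>\<^sub>v z) xs"
  have cy: "set ys \<subseteq> carrier_vec N" using cx unfolding ys_def by auto
  have "vsum N ys = a \<cdot>\<^sub>v x"
  proof (rule eq_vecI)
    show "dim_vec (vsum N ys) = dim_vec (a \<cdot>\<^sub>v x)"
      using vsum_carrier[OF cy] vsum_carrier[OF cx] xs by simp
    fix l assume "l < dim_vec (a \<cdot>\<^sub>v x)"
    hence l: "l < N" using vsum_carrier[OF cx] xs by simp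
    have "vsum N ys $ l = (\<Sum>z\<leftarrow>ys. z $ l)" by (rule vsum_index[OF cy l])
    also have "\<dots> = (\<Sum>z\<leftarrow>xs. a * z $ l)"
      unfolding ys_def using cx l by (auto simp: o_def intro!: arg_cong[where f=sum_list] map_cong)
    also have "\<dots> = a * (\<Sum>z\<leftarrow>xs. z $ l)" by (induction xs) (auto simp: algebra_simps)
    also have "\<dots> = (a \<cdot>\<^sub>v x) $ l" using vsum_index[OF cx l] vsum_carrier[OF cx] xs l by simp
    finally show "vsum N ys $ l = (a \<cdot>\<^sub>v x) $ l" .
  qed
  moreover have "\<forall>z\<in>set ys. z \<in> carrier_vec N \<and> (\<exists>c. c \<noteq> 1 \<and> PM *\<^sub>v z = c \<cdot>\<^sub>v z)"
  proof
    fix z assume "z \<in> set ys"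
    then obtain w where w: "w \<in> set xs" "z = a \<cdot>\<^sub>v w" unfolding ys_def by auto
    obtain c where c: "c \<noteq> 1" "PM *\<^sub>v w = c \<cdot>\<^sub>v w" using xs w by blast
    have wc: "w \<in> carrier_vec N" using xs w by blast
    have "PM *\<^sub>v z = a \<cdot>\<^sub>v (PM *\<^sub>v w)" using w PM_carrier wc by (simp add: mult_mat_vec)
    also have "\<dots> = c \<cdot>\<^sub>v z" using c w by (simp add: smult_smult_assoc mult.commute)
    finally show "z \<in> carrier_vec N \<and> (\<exists>c. c \<noteq> 1 \<and> PM *\<^sub>v z = c \<cdot>\<^sub>v z)" using c wc w by auto
  qed
  ultimately show ?thesis unfolding Mspace_def by (intro CollectI exI[of _ ys]) auto
qed

lemma Mspace_vsum: "set zs \<subseteq> MS \<Longrightarrow> vsum N zs \<in> MS"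
proof (induction zs)
  case Nil thus ?case using Mspace_zero by (simp add: vsum_def)
next
  case (Cons z zs)
  hence "z + vsum N zs \<in> MS" using Mspace_add by simp
  thus ?case by (simp add: vsum_def)
qed

lemma Mspace_lincomb: assumes "set bs \<subseteq> MS" shows "lincomb N c bs \<in> MS"
  unfolding lincomb_def using assms by (intro Mspace_vsum) (auto intro!: Mspace_smult simp: nth_mem subsetD)

end

lemma shift_sum:
  fixes g :: "nat \<Rightarrow> complex" assumes "g m = g 0"
  shows "(\<Sum>t<m. g (Suc t)) = (\<Sum>t<m. g t)"
proof -
  have "(\<Sum>t<Suc m. g t) = g 0 + (\<Sum>t<m. g (Suc t))" by (rule sum.lessThan_Suc_shift)
  moreover have "(\<Sum>t<Suc m. g t) = (\<Sum>t<m. g t) + g m" by simp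
  ultimately show ?thesis using assms by simp
qed

context pctx
begin

definition proj :: "complex vec \<Rightarrow> complex \<Rightarrow> complex vec" where
  "proj x z = vec N (\<lambda>l. \<Sum>t<per. z ^ t * x $ ((\<sigma> ^^ t) l))"

lemma proj_carrier: "proj x z \<in> carrier_vec N" unfolding proj_def by simp

lemma proj_dim[simp]: "dim_vec (proj x z) = N" unfolding proj_def by simp

lemma hinv_lt: "l < N \<Longrightarrow> hinv \<sigma> l < N"
  using permutes_in_image[OF permutes_inv[OF perm], of l] by simp

lemma proj_eig:
  assumes x: "x \<in> carrier_vec N" and z: "z ^ per = 1"
  shows "PM *\<^sub>v proj x z = z \<cdot>\<^sub>v proj x z"
proof (rule eq_vecI)
  show "dim_vec (PM *\<^sub>v proj x z) = dim_vec (z \<cdot>\<^sub>v proj x z)" using PM_carrier proj_carrier[of x z] by auto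
  fix l assume "l < dim_vec (z \<cdot>\<^sub>v proj x z)"
  hence l: "l < N" using proj_carrier[of x z] by auto
  define k where "k = hinv \<sigma> l"
  have k: "k < N" unfolding k_def using hinv_lt[OF l] .
  have lk: "l = \<sigma> k" unfolding k_def using permutes_inverses[OF perm] by simp
  define g where "g = (\<lambda>t. z ^ t * x $ ((\<sigma> ^^ t) k))"
  have "(PM *\<^sub>v proj x z) $ l = proj x z $ k"
    using perm_mat_mult_vec[OF proj_carrier l] unfolding k_def .
  also have "\<dots> = (\<Sum>t<per. g t)" unfolding proj_def g_def using k by simp
  also have "\<dots> = (\<Sum>t<per. g (Suc t))"
    by (rule shift_sum[symmetric]) (simp add: g_def z per_id_pt)
  also have "\<dots> = z * (\<Sum>t<per. z ^ t * x $ ((\<sigma> ^^ t) l))"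
    unfolding g_def lk by (simp add: sum_distrib_left funpow_Suc_right mult_ac del: funpow.simps)
  also have "\<dots> = (z \<cdot>\<^sub>v proj x z) $ l" unfolding proj_def using l by simp
  finally show "(PM *\<^sub>v proj x z) $ l = (z \<cdot>\<^sub>v proj x z) $ l" .
qed

lemma proj_sum:
  assumes x: "x \<in> carrier_vec N" and l: "l < N"
  shows "(\<Sum>z\<in>{z. z ^ per = 1}. proj x z $ l) = of_nat per * x $ l"
proof -
  have "(\<Sum>z\<in>{z. z ^ per = 1}. proj x z $ l)
      = (\<Sum>z\<in>{z. z ^ per = 1}. \<Sum>t<per. z ^ t * x $ ((\<sigma> ^^ t) l))"
    unfolding proj_def using l by simp
  also have "\<dots> = (\<Sum>t<per. (\<Sum>z\<in>{z::complex. z ^ per = 1}. z ^ t) * x $ ((\<sigma> ^^ t) l))"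
    by (subst sum.swap) (simp add: sum_distrib_right)
  also have "\<dots> = (\<Sum>t<per. if t = 0 then of_nat per * x $ l else 0)"
  proof (intro sum.cong refl)
    fix t assume t: "t \<in> {..<per}"
    show "(\<Sum>z\<in>{z::complex. z ^ per = 1}. z ^ t) * x $ ((\<sigma> ^^ t) l) = (if t = 0 then of_nat per * x $ l else 0)"
    proof (cases "t = 0")
      case True thus ?thesis using card_roots_unity_eq[OF per_pos] by simp
    next
      case False
      hence "\<not> per dvd t" using t by (auto dest: dvd_imp_le)
      thus ?thesis using roots_sum_pow[OF per_pos] False by simp
    qed
  qed
  also have "\<dots> = of_nat per * x $ l" using per_pos by simp
  finally show ?thesis .
qed

lemma unit_diff_M:
  assumes j: "j < N"
  shows "unit_vec N j - unit_vec N (\<sigma> j) \<in> MS"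
proof -
  define x :: "complex vec" where "x = unit_vec N j - unit_vec N (\<sigma> j)"
  have x: "x \<in> carrier_vec N" unfolding x_def by simp
  have xi: "x $ i = (if i = j then 1 else 0) - (if i = \<sigma> j then 1 else 0)" if "i < N" for i
    unfolding x_def using that j by (simp add: unit_vec_def)
  define U where "U = {z::complex. z ^ per = 1}"
  have finU: "finite U" unfolding U_def using per_pos by (intro finite_roots_unity) simp
  have oneU: "1 \<in> U" unfolding U_def by simp
  have p1: "proj x 1 $ l = 0" if l: "l < N" for l
  proof -
    define g where "g = (\<lambda>t. if (\<sigma> ^^ t) l = \<sigma> j then (1::complex) else 0)"
    have "proj x 1 $ l = (\<Sum>t<per. x $ ((\<sigma> ^^ t) l))" unfolding proj_def using l by simp
    also have "\<dots> = (\<Sum>t<per. (if (\<sigma> ^^ t) l = j then 1 else 0) - g t)"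
      using xi funpow_lt[OF l] unfolding g_def by (intro sum.cong refl) auto
    also have "\<dots> = (\<Sum>t<per. if (\<sigma> ^^ t) l = j then 1 else 0) - (\<Sum>t<per. g t)"
      by (simp add: sum_subtractf)
    also have "(\<Sum>t<per. g t) = (\<Sum>t<per. g (Suc t))"
      by (rule shift_sum[symmetric]) (simp add: g_def per_id_pt)
    also have "\<dots> = (\<Sum>t<per. if (\<sigma> ^^ t) l = j then 1 else 0)"
    proof (intro sum.cong refl)
      fix t
      have "(\<sigma> ((\<sigma> ^^ t) l) = \<sigma> j) = ((\<sigma> ^^ t) l = j)"
        using permutes_inj[OF perm] by (auto dest: injD)
      thus "g (Suc t) = (if (\<sigma> ^^ t) l = j then 1 else 0)" unfolding g_def by simp
    qed
    finally show ?thesis by simp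
  qed
  obtain zs where zs: "set zs = U - {1}" "distinct zs"
    using finite_distinct_list[of "U - {1}"] finU by auto
  define ys where "ys = map (\<lambda>z. (1 / of_nat per) \<cdot>\<^sub>v proj x z) zs"
  have ysM: "set ys \<subseteq> MS"
  proof
    fix y assume "y \<in> set ys"
    then obtain z where z: "z \<in> U" "z \<noteq> 1" "y = (1 / of_nat per) \<cdot>\<^sub>v proj x z"
      unfolding ys_def using zs by auto
    have "proj x z \<in> MS"
      using proj_eig[OF x] z proj_carrier unfolding U_def by (intro Mspace_eig) auto
    thus "y \<in> MS" using z Mspace_smult by simp
  qed
  have ysc: "set ys \<subseteq> carrier_vec N" unfolding ys_def using proj_carrier by auto
  have "vsum N ys = x"
  proof (rule eq_vecI)
    show "dim_vec (vsum N ys) = dim_vec x" using vsum_carrier[OF ysc] x by simp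
    fix l assume "l < dim_vec x"
    hence l: "l < N" using x by simp
    have "vsum N ys $ l = (\<Sum>y\<leftarrow>ys. y $ l)" by (rule vsum_index[OF ysc l])
    also have "\<dots> = (\<Sum>z\<leftarrow>zs. (1 / of_nat per) * proj x z $ l)"
      unfolding ys_def using l proj_carrier
      by (auto simp: o_def intro!: arg_cong[where f=sum_list] map_cong)
    also have "\<dots> = (\<Sum>z\<in>U - {1}. (1 / of_nat per) * proj x z $ l)"
      using sum.distinct_set_conv_list[OF zs(2), symmetric] zs(1) by simp
    also have "\<dots> = (1 / of_nat per) * (\<Sum>z\<in>U. proj x z $ l)"
      using finU oneU p1[OF l] by (simp add: sum_distrib_left sum.remove[of U 1])
    also have "\<dots> = x $ l" using proj_sum[OF x l] per_pos unfolding U_def by simp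
    finally show "vsum N ys $ l = x $ l" .
  qed
  thus ?thesis using Mspace_vsum[OF ysM] unfolding x_def by simp
qed

lemma unit_diff_funpow_M:
  assumes k: "k < N"
  shows "unit_vec N k - unit_vec N ((\<sigma> ^^ s) k) \<in> MS"
proof (induction s)
  case 0
  have z: "unit_vec N k - unit_vec N k = (0\<^sub>v N :: complex vec)" by (rule minus_cancel_vec) simp
  show ?case using z Mspace_zero by (metis funpow_0)
next
  case (Suc s)
  define j where "j = (\<sigma> ^^ s) k"
  have j: "j < N" unfolding j_def using funpow_lt[OF k] .
  have "unit_vec N k - unit_vec N ((\<sigma> ^^ Suc s) k)
      = (unit_vec N k - unit_vec N j :: complex vec) + (unit_vec N j - unit_vec N (\<sigma> j))"
    unfolding j_def by (intro eq_vecI) auto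
  thus ?case using Suc Mspace_add unit_diff_M[OF j] unfolding j_def by simp
qed

lemma hinv_image_cyc: assumes i: "i < N" shows "hinv \<sigma> ` cyc \<sigma> i = cyc \<sigma> i"
proof
  show "hinv \<sigma> ` cyc \<sigma> i \<subseteq> cyc \<sigma> i" using inv_in cyc_eq by blast
  show "cyc \<sigma> i \<subseteq> hinv \<sigma> ` cyc \<sigma> i"
  proof
    fix k assume "k \<in> cyc \<sigma> i"
    hence "\<sigma> k \<in> cyc \<sigma> i" using cyc_step by simp
    moreover have "k = hinv \<sigma> (\<sigma> k)" using permutes_inverses[OF perm] by simp
    ultimately show "k \<in> hinv \<sigma> ` cyc \<sigma> i" by blast
  qed
qed

lemma eig_cycsum:
  assumes y: "y \<in> carrier_vec N" and e: "PM *\<^sub>v y = c \<cdot>\<^sub>v y" and c: "c \<noteq> 1" and i: "i < N"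
  shows "(\<Sum>k\<in>cyc \<sigma> i. y $ k) = 0"
proof -
  define I where "I = cyc \<sigma> i"
  have IN: "I \<subseteq> {..<N}" unfolding I_def using cyc_sub[OF i] .
  have "(\<Sum>k\<in>I. (PM *\<^sub>v y) $ k) = (\<Sum>k\<in>I. y $ (hinv \<sigma> k))"
    using perm_mat_mult_vec[OF y] IN by (intro sum.cong) auto
  also have "\<dots> = (\<Sum>k\<in>hinv \<sigma> ` I. y $ k)"
  proof -
    have "inj (hinv \<sigma>)" by (rule permutes_inj[OF permutes_inv[OF perm]])
    hence inj: "inj_on (hinv \<sigma>) I" by (rule inj_on_subset) simp
    show ?thesis by (simp only: sum.reindex[OF inj] o_def)
  qed
  also have "\<dots> = (\<Sum>k\<in>I. y $ k)" unfolding I_def using hinv_image_cyc[OF i] by simp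
  finally have "(\<Sum>k\<in>I. (PM *\<^sub>v y) $ k) = (\<Sum>k\<in>I. y $ k)" .
  moreover have "(\<Sum>k\<in>I. (PM *\<^sub>v y) $ k) = c * (\<Sum>k\<in>I. y $ k)"
    using e IN y by (simp add: sum_distrib_left subset_iff)
  ultimately have "(c - 1) * (\<Sum>k\<in>I. y $ k) = 0" by (simp add: algebra_simps)
  thus ?thesis using c unfolding I_def by simp
qed

lemma Mspace_cycsum:
  assumes x: "x \<in> MS" and i: "i < N"
  shows "(\<Sum>k\<in>cyc \<sigma> i. x $ k) = 0"
proof -
  obtain ys where ys: "x = vsum N ys" "\<forall>z\<in>set ys. z \<in> carrier_vec N \<and> (\<exists>c. c \<noteq> 1 \<and> PM *\<^sub>v z = c \<cdot>\<^sub>v z)"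
    using x unfolding Mspace_def by blast
  have IN: "cyc \<sigma> i \<subseteq> {..<N}" using cyc_sub[OF i] .
  have "\<forall>z\<in>set ys. z \<in> carrier_vec N \<and> (\<exists>c. c \<noteq> 1 \<and> PM *\<^sub>v z = c \<cdot>\<^sub>v z) \<Longrightarrow>
        (\<Sum>k\<in>cyc \<sigma> i. vsum N ys $ k) = 0"
  proof (induction ys)
    case Nil thus ?case using IN by (auto simp: vsum_def intro!: sum.neutral)
  next
    case (Cons y ys)
    have yc: "y \<in> carrier_vec N" using Cons.prems by simp
    have ysc: "set ys \<subseteq> carrier_vec N" using Cons.prems by auto
    obtain c where c: "c \<noteq> 1" "PM *\<^sub>v y = c \<cdot>\<^sub>v y" using Cons.prems by auto
    have vs: "vsum N (y # ys) = y + vsum N ys" by (simp add: vsum_def)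
    have "(\<Sum>k\<in>cyc \<sigma> i. vsum N (y # ys) $ k) = (\<Sum>k\<in>cyc \<sigma> i. y $ k + vsum N ys $ k)"
      unfolding vs using IN vsum_carrier[OF ysc] by (intro sum.cong) auto
    also have "\<dots> = (\<Sum>k\<in>cyc \<sigma> i. y $ k) + (\<Sum>k\<in>cyc \<sigma> i. vsum N ys $ k)" by (rule sum.distrib)
    also have "\<dots> = 0" using eig_cycsum[OF yc c(2) c(1) i] Cons by simp
    finally show ?case .
  qed
  thus ?thesis using ys by simp
qed

end

context pctx
begin

definition rep :: "nat \<Rightarrow> nat" where "rep k = Min (cyc \<sigma> k)"
definition Rset :: "nat set" where "Rset = {k. k < N \<and> k \<noteq> rep k}"
definition ks :: "nat list" where "ks = sorted_list_of_set Rset"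
definition bs0 :: "complex vec list" where
  "bs0 = map (\<lambda>k. unit_vec N k - unit_vec N (rep k)) ks"

lemma rep_in: "k < N \<Longrightarrow> rep k \<in> cyc \<sigma> k"
  unfolding rep_def using cyc_finite self_in by (intro Min_in) auto

lemma rep_lt: "k < N \<Longrightarrow> rep k < N"
  using rep_in cyc_sub by blast

lemma rep_eq: "l \<in> cyc \<sigma> k \<Longrightarrow> rep l = rep k"
  unfolding rep_def using cyc_eq by simp

lemma rep_rep: "k < N \<Longrightarrow> rep (rep k) = rep k"
  using rep_eq rep_in by blast

lemma Rset_fin: "finite Rset" unfolding Rset_def by simp

lemma ks_set: "set ks = Rset" and ks_dist: "distinct ks"
  unfolding ks_def using Rset_fin by auto

lemma ks_lt: "i < length ks \<Longrightarrow> ks ! i < N"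
  using ks_set nth_mem unfolding Rset_def by fastforce

lemma len_bs0: "length bs0 = length ks" unfolding bs0_def by simp

lemma bs0_nth: "i < length ks \<Longrightarrow> bs0 ! i = unit_vec N (ks ! i) - unit_vec N (rep (ks ! i))"
  unfolding bs0_def by simp

lemma bs0_carrier: "set bs0 \<subseteq> carrier_vec N"
  unfolding bs0_def by auto

lemma bs0_index:
  assumes i: "i < length ks" and l: "l < N"
  shows "bs0 ! i $ l = (if l = ks ! i then 1 else 0) - (if l = rep (ks ! i) then 1 else 0)"
  using bs0_nth[OF i] l rep_lt[OF ks_lt[OF i]] ks_lt[OF i] by simp

lemma rep_not_R: "k \<in> Rset \<Longrightarrow> l \<in> Rset \<Longrightarrow> rep k \<noteq> l"
proof
  assume k: "k \<in> Rset" and l: "l \<in> Rset" and e: "rep k = l"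
  have "k < N" using k unfolding Rset_def by simp
  hence "rep l = rep k" using rep_rep e by metis
  thus False using l e unfolding Rset_def by simp
qed

lemma bs0_M: "set bs0 \<subseteq> MS"
proof
  fix y assume "y \<in> set bs0"
  then obtain k where k: "k \<in> Rset" "y = unit_vec N k - unit_vec N (rep k)"
    unfolding bs0_def using ks_set by auto
  have kN: "k < N" using k unfolding Rset_def by simp
  obtain s where "rep k = (\<sigma> ^^ s) k" using rep_in[OF kN] unfolding cyc_def by auto
  thus "y \<in> MS" using unit_diff_funpow_M[OF kN, of s] k by simp
qed

lemma bs0_indep:
  assumes z: "lincomb N c bs0 = 0\<^sub>v N"
  shows "\<forall>i<length bs0. c i = 0"
proof (intro allI impI)
  fix i assume "i < length bs0"
  hence i: "i < length ks" using len_bs0 by simp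
  define l where "l = ks ! i"
  have lR: "l \<in> Rset" unfolding l_def using ks_set i nth_mem by blast
  have lN: "l < N" unfolding l_def using ks_lt[OF i] .
  have "0 = lincomb N c bs0 $ l" using z lN by simp
  also have "\<dots> = (\<Sum>i'<length bs0. c i' * bs0 ! i' $ l)" by (rule lincomb_index[OF bs0_carrier lN])
  also have "\<dots> = (\<Sum>i'<length ks. if i' = i then c i' else 0)"
  proof (intro sum.cong)
    fix i' assume "i' \<in> {..<length ks}"
    hence i': "i' < length ks" by simp
    have "ks ! i' \<in> Rset" using ks_set i' nth_mem by blast
    hence "l \<noteq> rep (ks ! i')" using rep_not_R lR by metis
    moreover have "(l = ks ! i') = (i' = i)" unfolding l_def using ks_dist i i' nth_eq_iff_index_eq by metis
    ultimately show "c i' * bs0 ! i' $ l = (if i' = i then c i' else 0)"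
      using bs0_index[OF i' lN] by simp
  qed (simp add: len_bs0)
  also have "\<dots> = c i" using i by simp
  finally show "c i = 0" by simp
qed

lemma sum_ks: "(\<Sum>i<length ks. f (ks ! i)) = (\<Sum>k\<in>Rset. f k)"
proof -
  have "bij_betw ((!) ks) {..<length ks} Rset" by (rule bij_betw_nth[OF ks_dist refl ks_set[symmetric]])
  thus ?thesis by (rule sum.reindex_bij_betw)
qed

lemma prod_ks: "(\<Prod>i<length ks. f (ks ! i)) = (\<Prod>k\<in>Rset. f k)"
proof -
  have "bij_betw ((!) ks) {..<length ks} Rset" by (rule bij_betw_nth[OF ks_dist refl ks_set[symmetric]])
  thus ?thesis by (rule prod.reindex_bij_betw)
qed

lemma R_rep_fiber:
  assumes l: "l < N" "rep l = l"
  shows "{k \<in> Rset. rep k = l} = cyc \<sigma> l - {l}"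
proof
  show "{k \<in> Rset. rep k = l} \<subseteq> cyc \<sigma> l - {l}"
  proof
    fix k assume k: "k \<in> {k \<in> Rset. rep k = l}"
    hence kN: "k < N" and kr: "k \<noteq> rep k" and e: "rep k = l" unfolding Rset_def by auto
    have "l \<in> cyc \<sigma> k" using rep_in[OF kN] e by simp
    hence "cyc \<sigma> l = cyc \<sigma> k" by (rule cyc_eq)
    hence "k \<in> cyc \<sigma> l" using self_in by simp
    thus "k \<in> cyc \<sigma> l - {l}" using kr e by simp
  qed
  show "cyc \<sigma> l - {l} \<subseteq> {k \<in> Rset. rep k = l}"
  proof
    fix k assume k: "k \<in> cyc \<sigma> l - {l}"
    hence kN: "k < N" using cyc_sub[OF l(1)] by auto
    have "rep k = rep l" using k rep_eq by simp
    thus "k \<in> {k \<in> Rset. rep k = l}" using k kN l unfolding Rset_def by simp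
  qed
qed

lemma bs0_span:
  assumes x: "x \<in> MS"
  shows "x = lincomb N (\<lambda>i. x $ (ks ! i)) bs0"
proof (rule eq_vecI)
  have xc: "x \<in> carrier_vec N" using Mspace_carrier[OF x] .
  show "dim_vec x = dim_vec (lincomb N (\<lambda>i. x $ (ks ! i)) bs0)"
    using xc lincomb_carrier[OF bs0_carrier, of "\<lambda>i. x $ (ks ! i)"] by auto
  fix l assume "l < dim_vec (lincomb N (\<lambda>i. x $ (ks ! i)) bs0)"
  hence l: "l < N" using lincomb_carrier[OF bs0_carrier, of "\<lambda>i. x $ (ks ! i)"] by auto
  have "lincomb N (\<lambda>i. x $ (ks ! i)) bs0 $ l = (\<Sum>i<length ks. x $ (ks ! i) * bs0 ! i $ l)"
    using lincomb_index[OF bs0_carrier l] len_bs0 by simp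
  also have "\<dots> = (\<Sum>i<length ks. (\<lambda>k. x $ k * ((if l = k then 1 else 0) - (if l = rep k then 1 else 0))) (ks ! i))"
    using bs0_index l by (intro sum.cong) auto
  also have "\<dots> = (\<Sum>k\<in>Rset. x $ k * ((if l = k then 1 else 0) - (if l = rep k then 1 else 0)))"
    by (rule sum_ks)
  also have "\<dots> = (\<Sum>k\<in>Rset. (if l = k then x $ k else 0) - (if rep k = l then x $ k else 0))"
    by (intro sum.cong refl) auto
  also have "\<dots> = (\<Sum>k\<in>Rset. if l = k then x $ k else 0) - (\<Sum>k\<in>Rset. if rep k = l then x $ k else 0)"
    by (rule sum_subtractf)
  also have "\<dots> = x $ l"
  proof (cases "l \<in> Rset")
    case True
    have "(\<Sum>k\<in>Rset. if rep k = l then x $ k else 0) = 0"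
      using rep_not_R True by (intro sum.neutral) auto
    thus ?thesis using True Rset_fin by simp
  next
    case False
    hence rl: "rep l = l" using l unfolding Rset_def by simp
    have "(\<Sum>k\<in>Rset. if rep k = l then x $ k else 0) = (\<Sum>k\<in>{k \<in> Rset. rep k = l}. x $ k)"
      using Rset_fin by (simp add: sum.inter_filter)
    also have "\<dots> = (\<Sum>k\<in>cyc \<sigma> l - {l}. x $ k)" using R_rep_fiber[OF l rl] by simp
    also have "\<dots> = (\<Sum>k\<in>cyc \<sigma> l. x $ k) - x $ l"
      using cyc_finite[OF l] self_in by (simp add: sum_diff1)
    also have "\<dots> = - x $ l" using Mspace_cycsum[OF x l] by simp
    moreover have "(\<Sum>k\<in>Rset. if l = k then x $ k else 0) = 0"
      using False by (intro sum.neutral) auto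
    ultimately show ?thesis by simp
  qed
  finally show "x $ l = lincomb N (\<lambda>i. x $ (ks ! i)) bs0 $ l" by simp
qed

lemma bs0_basis: "is_basis N bs0 MS"
  unfolding is_basis_def
proof (intro conjI)
  show "set bs0 \<subseteq> carrier_vec N" by (rule bs0_carrier)
  show "\<forall>c. lincomb N c bs0 = 0\<^sub>v N \<longrightarrow> (\<forall>i<length bs0. c i = 0)" using bs0_indep by blast
  show "MS = {lincomb N c bs0 |c. True}"
  proof
    show "MS \<subseteq> {lincomb N c bs0 |c. True}" using bs0_span by blast
    show "{lincomb N c bs0 |c. True} \<subseteq> MS" using Mspace_lincomb[OF bs0_M] by blast
  qed
qed

end

lemma diag_carrier: "diag_el N a \<in> carrier_mat N N" unfolding diag_el_def by simp

lemma diag_mult_vec: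
  assumes y: "y \<in> carrier_vec N" and l: "l < N"
  shows "(diag_el N a *\<^sub>v y) $ l = zeta N ^ a l * y $ l"
proof -
  have "(diag_el N a *\<^sub>v y) $ l = (\<Sum>j<N. (if l = j then zeta N ^ a l else 0) * y $ j)"
    using y l by (simp add: diag_el_def scalar_prod_def row_def atLeast0LessThan)
  also have "\<dots> = (\<Sum>j<N. if j = l then zeta N ^ a l * y $ l else 0)"
    by (intro sum.cong refl) auto
  also have "\<dots> = zeta N ^ a l * y $ l" using l by simp
  finally show ?thesis .
qed

lemma det_diag: "det (diag_el N a) = (\<Prod>i<N. zeta N ^ a i)"
proof -
  have ut: "upper_triangular (diag_el N a)" unfolding upper_triangular_def diag_el_def by auto
  have "det (diag_el N a) = prod_list (diag_mat (diag_el N a))"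
    by (rule det_upper_triangular[OF ut diag_carrier])
  also have "diag_mat (diag_el N a) = map (\<lambda>i. zeta N ^ a i) [0..<N]"
    unfolding diag_mat_def diag_el_def by simp
  also have "prod_list (map (\<lambda>i. zeta N ^ a i) [0..<N]) = (\<Prod>i\<in>set [0..<N]. zeta N ^ a i)"
    by (rule prod.distinct_set_conv_list[symmetric]) simp
  finally show ?thesis by (simp add: atLeast0LessThan)
qed

lemma zeta_pow_N: "N > 0 \<Longrightarrow> zeta N ^ N = 1"
  unfolding zeta_def using cis_pow_eq_1[of N N] by simp

context pctx
begin

lemma diag_comm:
  assumes a: "\<forall>k<N. a (\<sigma> k) = a k"
  shows "diag_el N a * PM = PM * diag_el N a"
proof (rule eq_matI)
  fix i j assume ij: "i < dim_row (PM * diag_el N a)" "j < dim_col (PM * diag_el N a)"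
  hence i: "i < N" and j: "j < N" using PM_carrier diag_carrier[of N a] by auto
  have "(diag_el N a * PM) $$ (i, j) = (\<Sum>k<N. (if i = k then zeta N ^ a i else 0) * PM $$ (k, j))"
    using i j PM_carrier by (simp add: diag_el_def scalar_prod_def row_def col_def atLeast0LessThan)
  also have "\<dots> = (\<Sum>k<N. if k = i then zeta N ^ a i * PM $$ (i, j) else 0)"
    by (intro sum.cong refl) auto
  also have "\<dots> = zeta N ^ a i * (if i = \<sigma> j then 1 else 0)"
    using i j by (simp add: perm_mat_def)
  also have "\<dots> = (if i = \<sigma> j then 1 else 0) * zeta N ^ a j"
    using a j by auto
  also have "\<dots> = (\<Sum>k<N. if k = j then PM $$ (i, j) * zeta N ^ a j else 0)"
    using i j by (simp add: perm_mat_def)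
  also have "\<dots> = (\<Sum>k<N. PM $$ (i, k) * (if k = j then zeta N ^ a k else 0))"
    by (intro sum.cong refl) auto
  also have "\<dots> = (PM * diag_el N a) $$ (i, j)"
    using i j PM_carrier by (simp add: diag_el_def scalar_prod_def row_def col_def atLeast0LessThan)
  finally show "(diag_el N a * PM) $$ (i, j) = (PM * diag_el N a) $$ (i, j)" .
qed (use PM_carrier diag_carrier[of N a] in auto)

lemma diag_centr:
  assumes a: "\<forall>k<N. a (\<sigma> k) = a k" and S: "id \<in> S" and N: "N > 0"
    and dv: "N dvd (\<Sum>k<N. a k)"
  shows "diag_el N a \<in> centralizer (Ggrp N S) PM"
proof -
  have "det (diag_el N a) = zeta N ^ (\<Sum>k<N. a k)" by (simp add: det_diag power_sum)
  also have "\<dots> = 1" using dv cis_pow_eq_1[OF N] unfolding zeta_def by simp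
  finally have "diag_el N a \<in> SLf N" unfolding SLf_def Gd_def by blast
  moreover have "perm_mat N id = 1\<^sub>m N" unfolding perm_mat_def by (intro eq_matI) auto
  ultimately have "diag_el N a \<in> Ggrp N S"
    unfolding Ggrp_def using S left_mult_one_mat[OF diag_carrier[of N a]]
    by (intro CollectI exI[of _ id] exI[of _ "diag_el N a"]) auto
  thus ?thesis unfolding centralizer_def using diag_comm[OF a] by simp
qed

lemma a_funpow: "\<forall>k<N. a (\<sigma> k) = a k \<Longrightarrow> k < N \<Longrightarrow> a ((\<sigma> ^^ s) k) = a k"
  by (induction s) (auto simp: funpow_lt)

lemma a_rep: assumes a: "\<forall>k<N. a (\<sigma> k) = a k" and k: "k < N" shows "a (rep k) = a k"
proof -
  obtain s where "rep k = (\<sigma> ^^ s) k" using rep_in[OF k] unfolding cyc_def by auto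
  thus ?thesis using a_funpow[OF a k] by simp
qed

definition A0 :: "(nat \<Rightarrow> nat) \<Rightarrow> complex mat" where
  "A0 a = mat (length bs0) (length bs0) (\<lambda>(i,j). if i = j then zeta N ^ a (ks ! j) else 0)"

lemma A0_carrier: "A0 a \<in> carrier_mat (length bs0) (length bs0)" unfolding A0_def by simp

lemma A0h:
  assumes a: "\<forall>k<N. a (\<sigma> k) = a k"
  shows "\<forall>j<length bs0. diag_el N a *\<^sub>v bs0 ! j = lincomb N (\<lambda>i. A0 a $$ (i, j)) bs0"
proof (intro allI impI)
  fix j assume "j < length bs0"
  hence j: "j < length ks" using len_bs0 by simp
  have bj: "bs0 ! j \<in> carrier_vec N" using bs0_carrier j len_bs0 nth_mem by (metis subsetD)
  show "diag_el N a *\<^sub>v bs0 ! j = lincomb N (\<lambda>i. A0 a $$ (i, j)) bs0"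
  proof (rule eq_vecI)
    show "dim_vec (diag_el N a *\<^sub>v bs0 ! j) = dim_vec (lincomb N (\<lambda>i. A0 a $$ (i, j)) bs0)"
      using lincomb_carrier[OF bs0_carrier, of "\<lambda>i. A0 a $$ (i, j)"] diag_carrier[of N a] by auto
    fix l assume "l < dim_vec (lincomb N (\<lambda>i. A0 a $$ (i, j)) bs0)"
    hence l: "l < N" using lincomb_carrier[OF bs0_carrier, of "\<lambda>i. A0 a $$ (i, j)"] by auto
    have kN: "ks ! j < N" using ks_lt[OF j] .
    have "lincomb N (\<lambda>i. A0 a $$ (i, j)) bs0 $ l = (\<Sum>i<length bs0. A0 a $$ (i, j) * bs0 ! i $ l)"
      by (rule lincomb_index[OF bs0_carrier l])
    also have "\<dots> = (\<Sum>i<length bs0. if i = j then zeta N ^ a (ks ! j) * bs0 ! j $ l else 0)"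
      using j len_bs0 by (intro sum.cong refl) (auto simp: A0_def)
    also have "\<dots> = zeta N ^ a (ks ! j) * bs0 ! j $ l" using j len_bs0 by simp
    also have "\<dots> = zeta N ^ a l * bs0 ! j $ l"
      using bs0_index[OF j l] a_rep[OF a kN] by auto
    also have "\<dots> = (diag_el N a *\<^sub>v bs0 ! j) $ l" using diag_mult_vec[OF bj l] by simp
    finally show "(diag_el N a *\<^sub>v bs0 ! j) $ l = lincomb N (\<lambda>i. A0 a $$ (i, j)) bs0 $ l" by simp
  qed
qed

lemma det_A0: "det (A0 a) = (\<Prod>k\<in>Rset. zeta N ^ a k)"
proof -
  have ut: "upper_triangular (A0 a)" unfolding upper_triangular_def A0_def by auto
  have "det (A0 a) = prod_list (diag_mat (A0 a))"
    by (rule det_upper_triangular[OF ut A0_carrier])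
  also have "diag_mat (A0 a) = map (\<lambda>i. zeta N ^ a (ks ! i)) [0..<length ks]"
    unfolding diag_mat_def A0_def len_bs0 by simp
  also have "prod_list (map (\<lambda>i. zeta N ^ a (ks ! i)) [0..<length ks])
      = (\<Prod>i\<in>set [0..<length ks]. zeta N ^ a (ks ! i))"
    by (rule prod.distinct_set_conv_list[symmetric]) simp
  also have "\<dots> = (\<Prod>i<length ks. zeta N ^ a (ks ! i))" by (simp add: atLeast0LessThan)
  also have "\<dots> = (\<Prod>k\<in>Rset. zeta N ^ a k)" by (rule prod_ks)
  finally show ?thesis .
qed

lemma det_restr_diag:
  assumes a: "\<forall>k<N. a (\<sigma> k) = a k"
  shows "det_restr N (diag_el N a) MS = (\<Prod>k\<in>Rset. zeta N ^ a k)"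
proof -
  define Pd where "Pd = (\<lambda>d. \<exists>bs A. is_basis N bs MS \<and>
      A \<in> carrier_mat (length bs) (length bs) \<and>
      (\<forall>j < length bs. diag_el N a *\<^sub>v (bs ! j) = lincomb N (\<lambda>i. A $$ (i, j)) bs) \<and>
      d = det A)"
  have ex: "Pd (det (A0 a))" unfolding Pd_def
    using bs0_basis A0_carrier A0h[OF a] by blast
  have "Pd (SOME d. Pd d)" using someI[of Pd, OF ex] .
  then obtain bs A where bs: "is_basis N bs MS" and A: "A \<in> carrier_mat (length bs) (length bs)"
    and Ah: "\<forall>j < length bs. diag_el N a *\<^sub>v (bs ! j) = lincomb N (\<lambda>i. A $$ (i, j)) bs"
    and d: "(SOME d. Pd d) = det A" unfolding Pd_def by blast
  have "det A = det (A0 a)"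
    by (rule det_basis_indep[OF bs bs0_basis diag_carrier A Ah A0_carrier A0h[OF a]])
  hence "(SOME d. Pd d) = (\<Prod>k\<in>Rset. zeta N ^ a k)" using d det_A0 by simp
  thus ?thesis unfolding det_restr_def Pd_def .
qed

end

context pctx
begin

abbreviation "CS \<equiv> cycle_supports N \<sigma>"

lemma C_fin: "finite CS" unfolding supports_eq by simp

lemma C_cases: assumes "I \<in> CS" obtains i where "i < N" "I = cyc \<sigma> i"
  using assms unfolding supports_eq by blast

lemma C_sub: "I \<in> CS \<Longrightarrow> I \<subseteq> {..<N}"
  by (metis C_cases cyc_sub)

lemma C_mem: "I \<in> CS \<Longrightarrow> k \<in> I \<longleftrightarrow> k < N \<and> cyc \<sigma> k = I"
  by (metis C_cases cyc_mem_iff C_sub lessThan_iff subsetD)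

lemma C_disj: "I1 \<in> CS \<Longrightarrow> I2 \<in> CS \<Longrightarrow> k \<in> I1 \<Longrightarrow> k \<in> I2 \<Longrightarrow> I1 = I2"
  using C_mem by metis

lemma C_card: assumes I: "I \<in> CS" shows "0 < card I \<and> card I \<le> N"
proof -
  obtain i where i: "i < N" "I = cyc \<sigma> i" using C_cases[OF I] by blast
  have "card I \<le> card {..<N}" using i cyc_sub cyc_finite by (intro card_mono) auto
  moreover have "0 < card I" using i cyc_finite self_in by (auto simp: card_gt_0_iff)
  ultimately show ?thesis by simp
qed

lemma sum_partition: fixes F :: "nat \<Rightarrow> complex" shows "(\<Sum>k<N. F k) = (\<Sum>I\<in>CS. \<Sum>k\<in>I. F k)"
proof -
  have "(\<Sum>k<N. F k) = (\<Sum>I\<in>cyc \<sigma> ` {..<N}. \<Sum>k\<in>{x. x \<in> {..<N} \<and> cyc \<sigma> x = I}. F k)"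
    by (rule sum.image_gen) simp
  also have "\<dots> = (\<Sum>I\<in>CS. \<Sum>k\<in>I. F k)"
    unfolding supports_eq[symmetric]
  proof (rule sum.cong[OF refl])
    fix I assume "I \<in> CS"
    hence "{x. x \<in> {..<N} \<and> cyc \<sigma> x = I} = I" using C_mem by auto
    thus "(\<Sum>k\<in>{x. x \<in> {..<N} \<and> cyc \<sigma> x = I}. F k) = (\<Sum>k\<in>I. F k)" by simp
  qed
  finally show ?thesis .
qed

definition emb :: "(nat set \<Rightarrow> complex) \<Rightarrow> complex vec" where
  "emb \<phi> = vec N (\<lambda>k. \<phi> (cyc \<sigma> k))"

lemma emb_carrier: "emb \<phi> \<in> carrier_vec N" unfolding emb_def by simp

lemma emb_Fix: "emb \<phi> \<in> Fix N PM"
proof -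
  have "PM *\<^sub>v emb \<phi> = emb \<phi>"
  proof (rule eq_vecI)
    fix l assume "l < dim_vec (emb \<phi>)"
    hence l: "l < N" by (simp add: emb_def)
    have "(PM *\<^sub>v emb \<phi>) $ l = emb \<phi> $ (hinv \<sigma> l)" by (rule perm_mat_mult_vec[OF emb_carrier l])
    also have "\<dots> = \<phi> (cyc \<sigma> (hinv \<sigma> l))" using hinv_lt[OF l] by (simp add: emb_def)
    also have "cyc \<sigma> (hinv \<sigma> l) = cyc \<sigma> l" using inv_in cyc_eq by blast
    finally show "(PM *\<^sub>v emb \<phi>) $ l = emb \<phi> $ l" using l by (simp add: emb_def)
  qed (use PM_carrier in \<open>simp add: emb_def\<close>)
  thus ?thesis unfolding Fix_def using emb_carrier by simp
qed

lemma emb_upd: "emb (\<phi>(J := t)) = emb (\<phi>(J := 0)) + t \<cdot>\<^sub>v emb (\<lambda>I. if I = J then 1 else 0)"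
  unfolding emb_def by (intro eq_vecI) auto

lemma emb_sum: "I \<in> CS \<Longrightarrow> (\<Sum>k\<in>I. emb \<phi> $ k) = of_nat (card I) * \<phi> I"
proof -
  assume I: "I \<in> CS"
  have "(\<Sum>k\<in>I. emb \<phi> $ k) = (\<Sum>k\<in>I. \<phi> I)"
    using C_mem[OF I] by (intro sum.cong refl) (auto simp: emb_def)
  thus ?thesis by simp
qed

lemma key:
  assumes N2: "2 \<le> N" and S_id: "id \<in> S"
    and r_bound: "\<forall>I \<in> CS. r I \<le> N - 2"
    and invariant: "\<forall>v \<in> centralizer (Ggrp N S) PM.
        jac_eq N (fermat N) (Fix N PM)
          (\<lambda>x. inverse (det_restr N v MS) *
               (\<Prod>I \<in> CS. (\<Sum>k\<in>I. (v *\<^sub>v x) $ k) ^ r I))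
          (\<lambda>x. \<Prod>I \<in> CS. (\<Sum>k\<in>I. x $ k) ^ r I)"
    and I: "I \<in> CS" and J: "J \<in> CS" and IJ: "I \<noteq> J"
  shows "int N dvd (int (card J) * (int (r I) + 1) - int (card I) * (int (r J) + 1))"
proof -
  define cI where "cI = card I"
  define cJ where "cJ = card J"
  have cI: "0 < cI" "cI \<le> N" using C_card[OF I] unfolding cI_def by auto
  have cJ: "0 < cJ" "cJ \<le> N" using C_card[OF J] unfolding cJ_def by auto
  have disj: "k \<in> I \<Longrightarrow> k \<notin> J" for k using C_disj[OF I J] IJ by blast
  define a where "a = (\<lambda>k. if k \<in> I then cJ else if k \<in> J then N - cI else 0)"
  define \<alpha> where "\<alpha> = (\<lambda>I'. if I' = I then cJ else if I' = J then N - cI else 0)"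
  have a_alpha: "a k = \<alpha> I'" if "I' \<in> CS" "k \<in> I'" for I' k
    unfolding a_def \<alpha>_def using that C_disj[OF I that(1)] C_disj[OF J that(1)] disj by auto
  have a_inv: "\<forall>k<N. a (\<sigma> k) = a k"
  proof (intro allI impI)
    fix k assume k: "k < N"
    have "\<sigma> k \<in> I' \<longleftrightarrow> k \<in> I'" if "I' \<in> CS" for I'
      using that cyc_step by (metis C_cases)
    thus "a (\<sigma> k) = a k" unfolding a_def using I J by simp
  qed
  have suma: "(\<Sum>k<N. a k) = N * cJ"
  proof -
    have IN: "I \<subseteq> {..<N}" and JN: "J \<subseteq> {..<N}" using C_sub I J by auto
    have "(\<Sum>k<N. a k) = (\<Sum>k\<in>{..<N} \<inter> {x. x \<in> I}. cJ) + (\<Sum>k\<in>{..<N} \<inter> - {x. x \<in> I}. if k \<in> J then N - cI else 0)"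
      unfolding a_def by (rule sum.If_cases) simp
    also have "{..<N} \<inter> {x. x \<in> I} = I" using IN by auto
    also have "(\<Sum>k\<in>{..<N} \<inter> - {x. x \<in> I}. if k \<in> J then N - cI else 0)
        = (\<Sum>k\<in>J. N - cI)"
    proof -
      have "(\<Sum>k\<in>{..<N} \<inter> - {x. x \<in> I}. if k \<in> J then N - cI else 0)
          = (\<Sum>k\<in>({..<N} \<inter> - {x. x \<in> I}) \<inter> J. N - cI)"
        by (rule sum.inter_restrict[symmetric]) simp
      also have "({..<N} \<inter> - {x. x \<in> I}) \<inter> J = J" using JN disj by auto
      finally show ?thesis .
    qed
    finally have "(\<Sum>k<N. a k) = cI * cJ + cJ * (N - cI)" unfolding cI_def cJ_def by simp
    also have "\<dots> = N * cJ" using cI by (simp add: algebra_simps diff_mult_distrib2)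
    finally show ?thesis .
  qed
  define v where "v = diag_el N a"
  have N0: "N > 0" using N2 by simp
  have vC: "v \<in> centralizer (Ggrp N S) PM"
    unfolding v_def using diag_centr[OF a_inv S_id N0] suma by simp
  define d where "d = det_restr N v MS"
  have d: "d = (\<Prod>k\<in>Rset. zeta N ^ a k)" unfolding d_def v_def by (rule det_restr_diag[OF a_inv])
  obtain ws hs where wh: "length ws = length hs" "set ws \<subseteq> Fix N PM" "set hs \<subseteq> polyfun N"
    and eqx: "\<forall>x \<in> Fix N PM. inverse d * (\<Prod>I \<in> CS. (\<Sum>k\<in>I. (v *\<^sub>v x) $ k) ^ r I)
                 - (\<Prod>I \<in> CS. (\<Sum>k\<in>I. x $ k) ^ r I)
               = (\<Sum>i<length ws. (hs ! i) x * dir_deriv N (fermat N) (ws ! i) x)"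
    using invariant vC unfolding jac_eq_def d_def by blast
  have wsc: "\<And>i. i < length ws \<Longrightarrow> ws ! i \<in> carrier_vec N"
    using wh(2) nth_mem unfolding Fix_def by blast
  obtain D where D: "\<forall>h\<in>set hs. linepoly N D h" using list_linepoly[OF wh(3)] by blast
  define H where "H = (\<lambda>I' \<phi>. \<Sum>i<length ws. (hs ! i) (emb \<phi>) * (of_nat N * (\<Sum>k\<in>I'. ws ! i $ k)))"
  define Z where "Z = (\<Prod>I'\<in>CS. zeta N ^ (\<alpha> I' * r I'))"
  define K where "K = (inverse d * Z - 1) * (\<Prod>I'\<in>CS. of_nat (card I') ^ r I')"
  have vx: "(\<Sum>k\<in>I'. (v *\<^sub>v emb \<phi>) $ k) = zeta N ^ \<alpha> I' * (of_nat (card I') * \<phi> I')"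
    if I': "I' \<in> CS" for I' \<phi>
  proof -
    have "(\<Sum>k\<in>I'. (v *\<^sub>v emb \<phi>) $ k) = (\<Sum>k\<in>I'. zeta N ^ \<alpha> I' * emb \<phi> $ k)"
      unfolding v_def using C_sub[OF I'] a_alpha[OF I'] diag_mult_vec[OF emb_carrier]
      by (intro sum.cong refl) auto
    also have "\<dots> = zeta N ^ \<alpha> I' * (of_nat (card I') * \<phi> I')"
      using emb_sum[OF I'] by (simp add: sum_distrib_left[symmetric])
    finally show ?thesis .
  qed
  have eq: "\<forall>\<phi>. K * (\<Prod>I'\<in>CS. \<phi> I' ^ r I') = (\<Sum>I'\<in>CS. \<phi> I' ^ (N - 1) * H I' \<phi>)"
  proof
    fix \<phi>
    have "K * (\<Prod>I'\<in>CS. \<phi> I' ^ r I')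
        = inverse d * (\<Prod>I'\<in>CS. (zeta N ^ \<alpha> I' * (of_nat (card I') * \<phi> I')) ^ r I')
          - (\<Prod>I'\<in>CS. (of_nat (card I') * \<phi> I') ^ r I')"
      unfolding K_def Z_def by (simp add: power_mult_distrib prod.distrib power_mult algebra_simps)
    also have "\<dots> = inverse d * (\<Prod>I' \<in> CS. (\<Sum>k\<in>I'. (v *\<^sub>v emb \<phi>) $ k) ^ r I')
                 - (\<Prod>I' \<in> CS. (\<Sum>k\<in>I'. emb \<phi> $ k) ^ r I')"
      using vx emb_sum by simp
    also have "\<dots> = (\<Sum>i<length ws. (hs ! i) (emb \<phi>) * dir_deriv N (fermat N) (ws ! i) (emb \<phi>))"
      using eqx emb_Fix by blast
    also have "\<dots> = (\<Sum>i<length ws. (hs ! i) (emb \<phi>) *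
                      (\<Sum>I'\<in>CS. \<phi> I' ^ (N - 1) * (of_nat N * (\<Sum>k\<in>I'. ws ! i $ k))))"
    proof (intro sum.cong refl arg_cong2[where f="(*)"])
      fix i assume "i \<in> {..<length ws}"
      hence wi: "ws ! i \<in> carrier_vec N" using wsc by simp
      have "dir_deriv N (fermat N) (ws ! i) (emb \<phi>) = (\<Sum>k<N. of_nat N * (emb \<phi> $ k) ^ (N - 1) * ws ! i $ k)"
        by (rule dir_deriv_fermat[OF emb_carrier wi])
      also have "\<dots> = (\<Sum>I'\<in>CS. \<Sum>k\<in>I'. of_nat N * (emb \<phi> $ k) ^ (N - 1) * ws ! i $ k)"
        by (rule sum_partition)
      also have "\<dots> = (\<Sum>I'\<in>CS. \<phi> I' ^ (N - 1) * (of_nat N * (\<Sum>k\<in>I'. ws ! i $ k)))"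
      proof (intro sum.cong refl)
        fix I' assume I': "I' \<in> CS"
        have "(\<Sum>k\<in>I'. of_nat N * (emb \<phi> $ k) ^ (N - 1) * ws ! i $ k)
            = (\<Sum>k\<in>I'. \<phi> I' ^ (N - 1) * (of_nat N * ws ! i $ k))"
          using C_mem[OF I'] by (intro sum.cong refl) (auto simp: emb_def)
        thus "(\<Sum>k\<in>I'. of_nat N * (emb \<phi> $ k) ^ (N - 1) * ws ! i $ k)
            = \<phi> I' ^ (N - 1) * (of_nat N * (\<Sum>k\<in>I'. ws ! i $ k))"
          by (simp add: sum_distrib_left)
      qed
      finally show "dir_deriv N (fermat N) (ws ! i) (emb \<phi>)
          = (\<Sum>I'\<in>CS. \<phi> I' ^ (N - 1) * (of_nat N * (\<Sum>k\<in>I'. ws ! i $ k)))" .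
    qed
    also have "\<dots> = (\<Sum>I'\<in>CS. \<phi> I' ^ (N - 1) * H I' \<phi>)"
      unfolding H_def by (simp add: sum_distrib_left sum_distrib_right sum.swap[of _ CS] mult_ac)
    finally show "K * (\<Prod>I'\<in>CS. \<phi> I' ^ r I') = (\<Sum>I'\<in>CS. \<phi> I' ^ (N - 1) * H I' \<phi>)" .
  qed
  have Hpoly: "\<forall>I'\<in>CS. \<forall>\<phi>. \<forall>J'\<in>CS. \<exists>q. degree q \<le> D \<and> (\<forall>t. H I' (\<phi>(J':=t)) = poly q t)"
  proof (intro ballI allI)
    fix I' \<phi> J'
    define x0 where "x0 = emb (\<phi>(J' := 0))"
    define w0 where "w0 = emb (\<lambda>I. if I = J' then 1 else 0)"
    have x0: "x0 \<in> carrier_vec N" and w0: "w0 \<in> carrier_vec N" unfolding x0_def w0_def by (auto simp: emb_carrier)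
    have "\<forall>i<length ws. \<exists>q. degree q \<le> D \<and>
            (\<forall>t. (hs ! i) (x0 + t \<cdot>\<^sub>v w0) * (of_nat N * (\<Sum>k\<in>I'. ws ! i $ k)) = poly q t)"
    proof (intro allI impI)
      fix i assume "i < length ws"
      hence "hs ! i \<in> set hs" using wh(1) by simp
      hence "linepoly N D (hs ! i)" using D by blast
      then obtain q where q: "degree q \<le> D" "\<forall>t. (hs ! i) (x0 + t \<cdot>\<^sub>v w0) = poly q t"
        unfolding linepoly_def using x0 w0 by blast
      have "degree (Polynomial.smult (of_nat N * (\<Sum>k\<in>I'. ws ! i $ k)) q) \<le> D"
        using q(1) degree_smult_le order_trans by blast
      thus "\<exists>q. degree q \<le> D \<and>
            (\<forall>t. (hs ! i) (x0 + t \<cdot>\<^sub>v w0) * (of_nat N * (\<Sum>k\<in>I'. ws ! i $ k)) = poly q t)"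
        using q(2) by (intro exI[of _ "Polynomial.smult (of_nat N * (\<Sum>k\<in>I'. ws ! i $ k)) q"]) (simp add: mult.commute)
    qed
    from sum_poly_deg[OF this] obtain q where q: "degree q \<le> D"
      "\<forall>t. (\<Sum>i<length ws. (hs ! i) (x0 + t \<cdot>\<^sub>v w0) * (of_nat N * (\<Sum>k\<in>I'. ws ! i $ k))) = poly q t"
      by blast
    show "\<exists>q. degree q \<le> D \<and> (\<forall>t. H I' (\<phi>(J':=t)) = poly q t)"
      using q unfolding H_def x0_def w0_def emb_upd[symmetric] by blast
  qed
  have rM: "\<forall>I'\<in>CS. r I' < N - 1" using r_bound N2 by fastforce
  have K0: "K = 0" by (rule coeff_vanish[OF C_fin rM Hpoly eq])
  have "(\<Prod>I'\<in>CS. (of_nat (card I') :: complex) ^ r I') \<noteq> 0"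
    using C_card C_fin by (simp add: prod_zero_iff)
  hence "inverse d * Z = 1" using K0 unfolding K_def by simp
  hence dZ: "Z = d" by (metis inverse_zero mult_zero_left nonzero_inverse_inverse_eq zero_neq_one
        inverse_inverse_eq inverse_unique)
  define e where "e = cJ * r I + (N - cI) * r J"
  define f where "f = cJ * (cI - 1) + (N - cI) * (cJ - 1)"
  have Ze: "Z = zeta N ^ e"
  proof -
    have "Z = zeta N ^ (\<Sum>I'\<in>CS. \<alpha> I' * r I')" unfolding Z_def by (simp add: power_sum)
    also have "(\<Sum>I'\<in>CS. \<alpha> I' * r I') = e"
    proof -
      have "(\<Sum>I'\<in>CS. \<alpha> I' * r I') = \<alpha> I * r I + (\<Sum>I'\<in>CS - {I}. \<alpha> I' * r I')"
        using C_fin I by (simp add: sum.remove)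
      also have "(\<Sum>I'\<in>CS - {I}. \<alpha> I' * r I') = \<alpha> J * r J + (\<Sum>I'\<in>CS - {I} - {J}. \<alpha> I' * r I')"
        using C_fin J IJ by (subst sum.remove[of _ J]) auto
      also have "(\<Sum>I'\<in>CS - {I} - {J}. \<alpha> I' * r I') = 0" unfolding \<alpha>_def by (intro sum.neutral) auto
      finally show ?thesis unfolding e_def \<alpha>_def using IJ by simp
    qed
    finally show ?thesis .
  qed
  have df: "d = zeta N ^ f"
  proof -
    have "d = zeta N ^ (\<Sum>k\<in>Rset. a k)" using d by (simp add: power_sum)
    also have "(\<Sum>k\<in>Rset. a k) = f"
    proof -
      obtain i where i: "i < N" "I = cyc \<sigma> i" using C_cases[OF I] by blast
      obtain j where j: "j < N" "J = cyc \<sigma> j" using C_cases[OF J] by blast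
      have RI: "Rset \<inter> I = I - {rep i}"
      proof -
        have "k \<in> Rset \<longleftrightarrow> k \<noteq> rep i" if "k \<in> I" for k
          using that i cyc_sub[OF i(1)] rep_eq[of k i] unfolding Rset_def by auto
        thus ?thesis by auto
      qed
      have RJ: "Rset \<inter> J = J - {rep j}"
      proof -
        have "k \<in> Rset \<longleftrightarrow> k \<noteq> rep j" if "k \<in> J" for k
          using that j cyc_sub[OF j(1)] rep_eq[of k j] unfolding Rset_def by auto
        thus ?thesis by auto
      qed
      have cRI: "card (Rset \<inter> I) = cI - 1" unfolding RI cI_def using rep_in[OF i(1)] i cyc_finite[OF i(1)] by simp
      have cRJ: "card (Rset \<inter> J) = cJ - 1" unfolding RJ cJ_def using rep_in[OF j(1)] j cyc_finite[OF j(1)] by simp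
      have "(\<Sum>k\<in>Rset. a k) = (\<Sum>k\<in>Rset \<inter> {x. x \<in> I}. cJ) + (\<Sum>k\<in>Rset \<inter> - {x. x \<in> I}. if k \<in> J then N - cI else 0)"
        unfolding a_def by (rule sum.If_cases[OF Rset_fin])
      also have "(\<Sum>k\<in>Rset \<inter> - {x. x \<in> I}. if k \<in> J then N - cI else 0)
          = (\<Sum>k\<in>(Rset \<inter> - {x. x \<in> I}) \<inter> J. N - cI)"
        by (rule sum.inter_restrict[symmetric]) (simp add: Rset_fin)
      also have "(Rset \<inter> - {x. x \<in> I}) \<inter> J = Rset \<inter> J" using disj by auto
      also have "Rset \<inter> {x. x \<in> I} = Rset \<inter> I" by auto
      finally show ?thesis unfolding f_def using cRI cRJ by (simp add: mult.commute)
    qed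
    finally show ?thesis .
  qed
  have "zeta N ^ e = zeta N ^ f" using dZ Ze df by simp
  hence ef: "int e mod int N = int f mod int N" by (rule zeta_pow_eq[OF N0])
  hence "int N dvd (int e - int f)" by (simp add: mod_eq_dvd_iff)
  moreover have "int e - int f = (int cJ * (int (r I) + 1) - int cI * (int (r J) + 1)) + int N * (int (r J) - int cJ + 1)"
  proof -
    have d1: "int (N - cI) = int N - int cI" using cI(2) by simp
    have d2: "int (cI - 1) = int cI - 1" using cI(1) by simp
    have d3: "int (cJ - 1) = int cJ - 1" using cJ(1) by simp
    have ie: "int e = int cJ * int (r I) + (int N - int cI) * int (r J)"
      unfolding e_def by (simp only: of_nat_add of_nat_mult d1)
    have iff: "int f = int cJ * (int cI - 1) + (int N - int cI) * (int cJ - 1)"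
      unfolding f_def by (simp only: of_nat_add of_nat_mult d1 d2 d3)
    show ?thesis unfolding ie iff by (simp add: algebra_simps)
  qed
  ultimately have "int N dvd (int cJ * (int (r I) + 1) - int cI * (int (r J) + 1))"
    by (metis dvd_add_left_iff dvd_triv_left)
  thus ?thesis unfolding cI_def cJ_def .
qed

end

theorem proposition10:
  fixes N :: nat and S :: "(nat \<Rightarrow> nat) set" and \<sigma> :: "nat \<Rightarrow> nat"
    and r :: "nat set \<Rightarrow> nat"
  assumes prime: "prime N"
    and S_perms: "\<forall>\<tau> \<in> S. \<tau> permutes {..<N}"
    and S_id: "id \<in> S"
    and S_comp: "\<forall>\<tau> \<in> S. \<forall>\<rho> \<in> S. \<tau> \<circ> \<rho> \<in> S"
    and S_inv: "\<forall>\<tau> \<in> S. \<exists>\<rho> \<in> S. \<tau> \<circ> \<rho> = id"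
    and sigma_in: "\<sigma> \<in> S"
    and r_bound: "\<forall>I \<in> cycle_supports N \<sigma>. r I \<le> N - 2"
    and invariant: "\<forall>v \<in> centralizer (Ggrp N S) (perm_mat N \<sigma>).
        jac_eq N (fermat N) (Fix N (perm_mat N \<sigma>))
          (\<lambda>x. inverse (det_restr N v (Mspace N (perm_mat N \<sigma>))) *
               (\<Prod>I \<in> cycle_supports N \<sigma>. (\<Sum>k\<in>I. (v *\<^sub>v x) $ k) ^ r I))
          (\<lambda>x. \<Prod>I \<in> cycle_supports N \<sigma>. (\<Sum>k\<in>I. x $ k) ^ r I)"
  shows "\<forall>I \<in> cycle_supports N \<sigma>. \<forall>J \<in> cycle_supports N \<sigma>. \<forall>kI kJ :: int.
     kI \<in> {1..int N - 1} \<and> kJ \<in> {1..int N - 1} \<and>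
     (int (r I) + 1) mod int N = (kI * int (card I)) mod int N \<and>
     (int (r J) + 1) mod int N = (kJ * int (card J)) mod int N \<longrightarrow> kI = kJ"
proof -
  have perm: "\<sigma> permutes {..<N}" using S_perms sigma_in by blast
  interpret pctx N \<sigma> by unfold_locales (rule perm)
  have N2: "2 \<le> N" using prime prime_ge_2_nat by blast
  have pN: "prime (int N)" using prime by simp
  have notdvd: "\<not> int N dvd int (card I)" if I: "I \<in> CS" and lt: "card I < N" for I
  proof
    assume "int N dvd int (card I)"
    hence "N dvd card I" by simp
    moreover have "0 < card I" using C_card[OF I] by simp
    ultimately have "N \<le> card I" by (rule dvd_imp_le)
    thus False using lt by simp
  qed
  have cardlt: "card I < N" if I: "I \<in> CS" and kI: "kI \<in> {1..int N - 1}"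
    and h: "(int (r I) + 1) mod int N = (kI * int (card I)) mod int N" for I kI
  proof (rule ccontr)
    assume "\<not> card I < N"
    hence "card I = N" using C_card[OF I] by simp
    hence "(int (r I) + 1) mod int N = 0" using h by simp
    moreover have "0 \<le> int (r I) + 1" "int (r I) + 1 < int N" using r_bound I N2 by auto
    ultimately have "int (r I) + 1 = 0" by (simp add: mod_pos_pos_trivial)
    thus False by simp
  qed
  show ?thesis
  proof (intro ballI allI impI)
    fix I J kI kJ
    assume I: "I \<in> CS" and J: "J \<in> CS"
      and h: "kI \<in> {1..int N - 1} \<and> kJ \<in> {1..int N - 1} \<and>
         (int (r I) + 1) mod int N = (kI * int (card I)) mod int N \<and>
         (int (r J) + 1) mod int N = (kJ * int (card J)) mod int N"
    have cI: "card I < N" using cardlt[OF I] h by blast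
    have cJ: "card J < N" using cardlt[OF J] h by blast
    have nI: "\<not> int N dvd int (card I)" using notdvd[OF I cI] .
    have nJ: "\<not> int N dvd int (card J)" using notdvd[OF J cJ] .
    have dI: "int N dvd (int (r I) + 1 - kI * int (card I))" using h by (simp add: mod_eq_dvd_iff)
    have dJ: "int N dvd (int (r J) + 1 - kJ * int (card J))" using h by (simp add: mod_eq_dvd_iff)
    have "int N dvd (kI - kJ)"
    proof (cases "I = J")
      case True
      have dJ': "int N dvd (int (r I) + 1 - kJ * int (card I))" using dJ True by simp
      have "int N dvd ((int (r I) + 1 - kJ * int (card I)) - (int (r I) + 1 - kI * int (card I)))"
        by (rule dvd_diff[OF dJ' dI])
      hence "int N dvd ((kI - kJ) * int (card I))" by (simp add: algebra_simps)
      thus ?thesis using nI pN by (simp add: prime_dvd_mult_iff)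
    next
      case False
      have k: "int N dvd (int (card J) * (int (r I) + 1) - int (card I) * (int (r J) + 1))"
        by (rule key[OF N2 S_id r_bound invariant I J False])
      have "int (card I) * int (card J) * (kI - kJ)
          = (int (card J) * (int (r I) + 1) - int (card I) * (int (r J) + 1))
            - int (card J) * (int (r I) + 1 - kI * int (card I))
            + int (card I) * (int (r J) + 1 - kJ * int (card J))"
        by (simp add: algebra_simps)
      moreover have "int N dvd \<dots>" by (rule dvd_add[OF dvd_diff[OF k dvd_mult[OF dI]] dvd_mult[OF dJ]])
      ultimately have "int N dvd int (card I) * int (card J) * (kI - kJ)" by simp
      thus ?thesis using nI nJ pN by (simp add: prime_dvd_mult_iff)
    qed
    show "kI = kJ"
    proof (rule ccontr)
      assume "kI \<noteq> kJ"
      hence "\<bar>int N\<bar> \<le> \<bar>kI - kJ\<bar>" using \<open>int N dvd (kI - kJ)\<close> by (intro dvd_imp_le_int) auto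
      moreover have "\<bar>kI - kJ\<bar> < int N" using h by auto
      ultimately show False by simp
    qed
  qed
qed

end
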